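(* In the setting below, the simple regret $r_\Lambda$ of Kometo satisfies, as a function of the budget $\Lambda$ (all other parameters fixed): Under Assumption (a): if $d=0$, $r_\Lambda=\tilde{\mathcal{O}}(\Lambda^{-\alpha})$ (in both the high- and low-budget regimes); if $d>0$, $r_\Lambda=\tilde{\mathcal{O}}(\Lambda^{-\frac{1}{d+1/\alpha}})$ in the high-budget regime and $r_\Lambda=\tilde{\mathcal{O}}(\Lambda^{-1/d}+\Lambda^{-\alpha})$ in the low-budget regime. Under Assumption (b): if $d=0$, $r_\Lambda=e^{\tilde{\mathcal{O}}(-\Lambda^{\beta/(1+\beta)})}$ in the high-budget regime and $r_\Lambda=e^{\tilde{\mathcal{O}}(-\Lambda^{\beta})}+e^{\tilde{\mathcal{O}}(-\Lambda)}$ in the low-budget regime; if $d>0$, $r_\Lambda=\tilde{\mathcal{O}}(\Lambda^{-1/d})$ in both regimes. Under Assumption (c): $r_\Lambda=e^{\tilde{\mathcal{O}}(-\Lambda)}$ if $d=0$ and $r_\Lambda=\tilde{\mathcal{O}}(\Lambda^{-1/d})$ if $d>0$.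
   Context: Setting: $\mathcal{X}$ has a hierarchical partitioning $\mathcal{P}=(\mathcal{P}_{h,i})$ with branching factor $K\ge2$ ($\mathcal{P}_{0,0}=\mathcal{X}$, the children $\mathcal{P}_{h+1,Ki+l}$, $0\le l\le K-1$, partition $\mathcal{P}_{h,i}$; each cell has a representative $x_{h,i}$). $\nu>0$, $\rho\in(0,1)$, $L=\log(1/\rho)$, $d\in[0,\log K/L]$, $C\ge (K\rho^d)^{\lfloor \log 3/L\rfloor}$, $C>1$. $f\in S(\mathcal{P},\nu,\rho,d,C)$: for one global maximizer $x^\star$, every $x$ in the depth-$h$ cell containing $x^\star$ satisfies $f(x)\ge f(x^\star)-\nu\rho^h$, and for all $h$ the number of depth-$h$ cells $\mathcal{P}_{h,i}$ with $\sup_{\mathcal{P}_{h,i}}f\ge f(x^\star)-3\nu\rho^h$ is at most $C\rho^{-dh}$. Fidelities $Z=[0,1]$, $f_z:\mathcal{X}\to\mathbb{R}$, bias $\zeta$ with strictly increasing $g_z$ and $\sup_x|f(x)-g_z(f_z(x))|\le\zeta(z)$, cost $\lambda$, available fidelities $z_c$ ($\lambda(z_c)\le c$) for $c\ge1$, cost-to-bias $\Phi(c)=\zeta(z_c)$. Assumption (a): $\Phi(c)\le A/c^\alpha$; (b): $\Phi(c)\le Be^{-c^\beta/\sigma}$; (c): $\Phi(c)=0$ for $c\ge a\ge1$. The family $(f_z)$ is in $F(\mathrm{Asm},f,\lambda)$ (some bias function makes the assumption hold). $r_\Lambda=\mathbb{E}[\max f-f(x_\Lambda)]$ for the output $x_\Lambda$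 of Kometo. Kometo: $\tilde\Lambda=\lfloor\frac{(e-1)\Lambda}{2Ke(\log\Lambda+1)^2}\rfloor$, $j_{\max}=\lfloor\log\tilde\Lambda\rfloor$; level $j$ means fidelity $z_{e^j}$; values $f_{h,i,j}=f_{z_{e^j}}(x_{h,i})$ available when flag $T_{h,i,j}=1$; opening $\mathcal{P}_{h,i}$ at level $j$ evaluates all children at all levels $0..j$ (setting their flags). It opens the root at level $j_{\max}$; then for $h=1..\lfloor\tilde\Lambda\rfloor$, $m=1..\lfloor\tilde\Lambda/h\rfloor$, with $j=\lfloor\log\frac{\tilde\Lambda}{hm}\rfloor$, opens at level $j$ the not-yet-opened depth-$h$ cell with flag $T_{h,i,j}=1$ and largest $f_{h,i,j}$; then for each $j\le j_{\max}$ takes the representative $x^c_j$ of a cell maximizing $f_{h,i,j}$, evaluates $f_{z_{\tilde\Lambda}}(x^c_j)$, and outputs the $x^c_j$ with largest such value. Regimes ($W$ = Lambert function, inverse of $w\mapsto we^w$ on $[0,\infty)$): under (a), with $h_1=\frac{1}{(d+1/\alpha)L}W\!\left(\frac{\tilde\Lambda\nu^{1/\alpha}(d+1/\alpha)L}{4CeA^{1/\alpha}}\right)$, high budget means $\nu\rho^{h_1}\le e^\alpha A$ and low budget means $\nu\rho^{h_1}>e^\alpha A$. Under (b), with $a_{b,\nu}=\max(\frac1{2\sigma},\log\frac B\nu)$ and $h_1=\left(\frac{\tilde\Lambda}{4Ce}\right)^{\frac{\beta}{\beta+1}}\left(\frac{1}{2\sigma L}\right)^{\frac1{\beta+1}}$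 if $d=0$, $h_1=\frac{\beta+1}{\beta dL}W\!\left(\frac{\beta}{\beta+1}dL\left(\frac{\tilde\Lambda}{4Ce}\right)^{\frac{\beta}{\beta+1}}\left(\frac{1}{2\sigma L}\right)^{\frac1{\beta+1}}\right)$ if $d>0$, high budget means $h_1\ge a_{b,\nu}/L$ and low budget means $h_1<a_{b,\nu}/L$. Notation: $\tilde{\mathcal{O}}(g(\Lambda))$ denotes a quantity bounded by $g(\Lambda)$ up to multiplicative factors independent of $\Lambda$ and polylogarithmic factors in $\Lambda$; $e^{\tilde{\mathcal{O}}(-g(\Lambda))}$ denotes a quantity bounded by $\exp(-c\,g(\Lambda)/\mathrm{polylog}(\Lambda))$ up to constant factors, for a constant $c>0$ independent of $\Lambda$. *)

theory Defs
  imports Complex_Main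
begin

text \<open>Cells P h i, depth h, index i < K^h; children of (h,i) are (h+1, K*i+l), l<K.
  xr h i is the representative of cell (h,i).\<close>

definition hier_part :: "nat \<Rightarrow> (nat \<Rightarrow> nat \<Rightarrow> 'x set) \<Rightarrow> (nat \<Rightarrow> nat \<Rightarrow> 'x) \<Rightarrow> bool" where
  "hier_part K P xr \<longleftrightarrow>
     2 \<le> K \<and> P 0 0 = UNIV \<and>
     (\<forall>h i. i < K ^ h \<longrightarrow>
        P h i = (\<Union>l<K. P (Suc h) (K * i + l)) \<and>
        (\<forall>l<K. \<forall>l'<K. l \<noteq> l' \<longrightarrow> P (Suc h) (K * i + l) \<inter> P (Suc h) (K * i + l') = {}) \<and>
        xr h i \<in> P h i)"

definition in_S :: "nat \<Rightarrow> (nat \<Rightarrow> nat \<Rightarrow> 'x set) \<Rightarrow> real \<Rightarrow> real \<Rightarrow> real \<Rightarrow> real \<Rightarrow> ('x \<Rightarrow> real) \<Rightarrow> bool" where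
  "in_S K P \<nu> \<rho> d C f \<longleftrightarrow>
     (\<exists>xs. (\<forall>x. f x \<le> f xs) \<and>
        (\<forall>h i. i < K ^ h \<and> xs \<in> P h i \<longrightarrow> (\<forall>x\<in>P h i. f x \<ge> f xs - \<nu> * \<rho> ^ h)) \<and>
        (\<forall>h. real (card {i. i < K ^ h \<and> (SUP x\<in>P h i. f x) \<ge> f xs - 3 * \<nu> * \<rho> ^ h})
               \<le> C * \<rho> powr (- d * real h)))"

definition params_ok :: "nat \<Rightarrow> real \<Rightarrow> real \<Rightarrow> real \<Rightarrow> real \<Rightarrow> bool" where
  "params_ok K \<nu> \<rho> d C \<longleftrightarrow>
     2 \<le> K \<and> \<nu> > 0 \<and> 0 < \<rho> \<and> \<rho> < 1 \<and>
     0 \<le> d \<and> d \<le> ln (real K) / ln (1 / \<rho>) \<and>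
     C \<ge> (real K * \<rho> powr d) powr real_of_int \<lfloor>ln 3 / ln (1 / \<rho>)\<rfloor> \<and> C > 1"

text \<open>fz z is the fidelity-z approximation f_z; zc c is the available fidelity z_c for cost c.\<close>
definition fidelities_ok :: "(real \<Rightarrow> real) \<Rightarrow> (real \<Rightarrow> real) \<Rightarrow> bool" where
  "fidelities_ok lam zc \<longleftrightarrow> (\<forall>c\<ge>1. zc c \<in> {0..1} \<and> lam (zc c) \<le> c)"

text \<open>Membership of (f_z) in F(Asm, f, lambda): some bias function zeta (with some strictly
  increasing g_z) makes the cost-to-bias function Phi(c) = zeta(z_c) satisfy Asm.\<close>
definition in_F :: "((real \<Rightarrow> real) \<Rightarrow> bool) \<Rightarrow> ('x \<Rightarrow> real) \<Rightarrow> (real \<Rightarrow> 'x \<Rightarrow> real) \<Rightarrow> (real \<Rightarrow> real) \<Rightarrow> bool" where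
  "in_F Asm f fz zc \<longleftrightarrow>
     (\<exists>\<zeta> g. (\<forall>z\<in>{0..1}. strict_mono (g z :: real \<Rightarrow> real) \<and> (\<forall>x. \<bar>f x - g z (fz z x)\<bar> \<le> \<zeta> z)) \<and>
            Asm (\<lambda>c. \<zeta> (zc c)))"

definition asm_a :: "real \<Rightarrow> real \<Rightarrow> (real \<Rightarrow> real) \<Rightarrow> bool" where
  "asm_a A \<alpha> \<Phi> \<longleftrightarrow> (\<forall>c\<ge>1. \<Phi> c \<le> A / c powr \<alpha>)"

definition asm_b :: "real \<Rightarrow> real \<Rightarrow> real \<Rightarrow> (real \<Rightarrow> real) \<Rightarrow> bool" where
  "asm_b B \<beta> \<sigma> \<Phi> \<longleftrightarrow> (\<forall>c\<ge>1. \<Phi> c \<le> B * exp (- (c powr \<beta>) / \<sigma>))"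

definition asm_c :: "real \<Rightarrow> (real \<Rightarrow> real) \<Rightarrow> bool" where
  "asm_c a \<Phi> \<longleftrightarrow> (\<forall>c\<ge>a. \<Phi> c = 0)"

definition valid_sel :: "('a set \<Rightarrow> ('a \<Rightarrow> real) \<Rightarrow> 'a) \<Rightarrow> bool" where
  "valid_sel sel \<longleftrightarrow>
     (\<forall>S \<phi>. finite S \<and> S \<noteq> {} \<longrightarrow> sel S \<phi> \<in> S \<and> (\<forall>y\<in>S. \<phi> y \<le> \<phi> (sel S \<phi>)))"

definition Lambda_tilde :: "nat \<Rightarrow> real \<Rightarrow> nat" where
  "Lambda_tilde K \<Lambda> =
     nat \<lfloor>(exp 1 - 1) * \<Lambda> / (2 * real K * exp 1 * (ln \<Lambda> + 1)^2)\<rfloor>"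

definition fval :: "(real \<Rightarrow> 'x \<Rightarrow> real) \<Rightarrow> (real \<Rightarrow> real) \<Rightarrow> (nat \<Rightarrow> nat \<Rightarrow> 'x) \<Rightarrow> nat \<Rightarrow> nat \<Rightarrow> nat \<Rightarrow> real" where
  "fval fz zc xr h i j = fz (zc (exp (real j))) (xr h i)"

type_synonym kstate = "(nat \<times> nat \<times> nat) set \<times> (nat \<times> nat) set"
  \<comment> \<open>flags T (triples (h,i,j) with T_{h,i,j}=1) and the set of opened cells\<close>

definition open_cell :: "nat \<Rightarrow> nat \<Rightarrow> nat \<Rightarrow> nat \<Rightarrow> kstate \<Rightarrow> kstate" where
  "open_cell K h i j st =
     (fst st \<union> {(Suc h, K * i + l, j') | l j'. l < K \<and> j' \<le> j}, insert (h, i) (snd st))"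

definition kometo_step ::
  "nat \<Rightarrow> (real \<Rightarrow> 'x \<Rightarrow> real) \<Rightarrow> (real \<Rightarrow> real) \<Rightarrow> (nat \<Rightarrow> nat \<Rightarrow> 'x) \<Rightarrow>
   ((nat \<times> nat) set \<Rightarrow> ((nat \<times> nat) \<Rightarrow> real) \<Rightarrow> nat \<times> nat) \<Rightarrow> nat \<Rightarrow> kstate \<Rightarrow> nat \<times> nat \<Rightarrow> kstate" where
  "kometo_step K fz zc xr selc Lt st hm =
     (let h = fst hm; m = snd hm;
          j = nat \<lfloor>ln (real Lt / real (h * m))\<rfloor>;
          Cand = {(h', i). h' = h \<and> (h, i) \<notin> snd st \<and> (h, i, j) \<in> fst st}
      in if Cand = {} then st
         else open_cell K h (snd (selc Cand (\<lambda>(h', i). fval fz zc xr h' i j))) j st)"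

definition kometo_schedule :: "nat \<Rightarrow> (nat \<times> nat) list" where
  "kometo_schedule Lt = concat (map (\<lambda>h. map (\<lambda>m. (h, m)) [1..<Lt div h + 1]) [1..<Lt + 1])"

definition kometo ::
  "nat \<Rightarrow> (real \<Rightarrow> 'x \<Rightarrow> real) \<Rightarrow> (real \<Rightarrow> real) \<Rightarrow> (nat \<Rightarrow> nat \<Rightarrow> 'x) \<Rightarrow>
   ((nat \<times> nat) set \<Rightarrow> ((nat \<times> nat) \<Rightarrow> real) \<Rightarrow> nat \<times> nat) \<Rightarrow>
   (nat set \<Rightarrow> (nat \<Rightarrow> real) \<Rightarrow> nat) \<Rightarrow> real \<Rightarrow> 'x" where
  "kometo K fz zc xr selc selj \<Lambda> =
     (let Lt = Lambda_tilde K \<Lambda>;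
          jmax = nat \<lfloor>ln (real Lt)\<rfloor>;
          st0 = open_cell K 0 0 jmax ({}, {});
          st = foldl (kometo_step K fz zc xr selc Lt) st0 (kometo_schedule Lt);
          xc = (\<lambda>j. case selc {(h, i). (h, i, j) \<in> fst st} (\<lambda>(h, i). fval fz zc xr h i j) of
                        (h, i) \<Rightarrow> xr h i);
          jstar = selj {..jmax} (\<lambda>j. fz (zc (real Lt)) (xc j))
      in xc jstar)"

text \<open>Evaluations are noiseless, so the only source of
  randomness is tie-breaking; we take the worst case over all tie-breaking rules, which
  upper-bounds the expectation over any randomised tie-breaking.\<close>
definition kometo_regret ::
  "nat \<Rightarrow> (real \<Rightarrow> 'x \<Rightarrow> real) \<Rightarrow> (real \<Rightarrow> real) \<Rightarrow> (nat \<Rightarrow> nat \<Rightarrow> 'x) \<Rightarrow> ('x \<Rightarrow> real) \<Rightarrow> real \<Rightarrow> real" where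
  "kometo_regret K fz zc xr f \<Lambda> =
     Sup {(SUP x. f x) - f (kometo K fz zc xr selc selj \<Lambda>) | selc selj.
            valid_sel selc \<and> valid_sel selj}"

definition lambertW :: "real \<Rightarrow> real" where
  "lambertW y = (THE w. 0 \<le> w \<and> w * exp w = y)"

definition h1_a :: "nat \<Rightarrow> real \<Rightarrow> real \<Rightarrow> real \<Rightarrow> real \<Rightarrow> real \<Rightarrow> real \<Rightarrow> real \<Rightarrow> real" where
  "h1_a K \<nu> \<rho> d C A \<alpha> \<Lambda> =
     (let L = ln (1 / \<rho>) in
      1 / ((d + 1 / \<alpha>) * L) *
      lambertW (real (Lambda_tilde K \<Lambda>) * \<nu> powr (1 / \<alpha>) * (d + 1 / \<alpha>) * L
                / (4 * C * exp 1 * A powr (1 / \<alpha>))))"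

definition high_budget_a :: "nat \<Rightarrow> real \<Rightarrow> real \<Rightarrow> real \<Rightarrow> real \<Rightarrow> real \<Rightarrow> real \<Rightarrow> real \<Rightarrow> bool" where
  "high_budget_a K \<nu> \<rho> d C A \<alpha> \<Lambda> \<longleftrightarrow> \<nu> * \<rho> powr (h1_a K \<nu> \<rho> d C A \<alpha> \<Lambda>) \<le> exp \<alpha> * A"

definition h1_b :: "nat \<Rightarrow> real \<Rightarrow> real \<Rightarrow> real \<Rightarrow> real \<Rightarrow> real \<Rightarrow> real \<Rightarrow> real" where
  "h1_b K \<rho> d C \<beta> \<sigma> \<Lambda> =
     (let L = ln (1 / \<rho>);
          Y = (real (Lambda_tilde K \<Lambda>) / (4 * C * exp 1)) powr (\<beta> / (\<beta> + 1)) *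
              (1 / (2 * \<sigma> * L)) powr (1 / (\<beta> + 1))
      in if d = 0 then Y
         else (\<beta> + 1) / (\<beta> * d * L) * lambertW (\<beta> / (\<beta> + 1) * d * L * Y))"

definition high_budget_b :: "nat \<Rightarrow> real \<Rightarrow> real \<Rightarrow> real \<Rightarrow> real \<Rightarrow> real \<Rightarrow> real \<Rightarrow> real \<Rightarrow> real \<Rightarrow> bool" where
  "high_budget_b K \<nu> \<rho> d C B \<beta> \<sigma> \<Lambda> \<longleftrightarrow>
     h1_b K \<rho> d C \<beta> \<sigma> \<Lambda> \<ge> max (1 / (2 * \<sigma>)) (ln (B / \<nu>)) / ln (1 / \<rho>)"

definition Otilde_on :: "real set \<Rightarrow> (real \<Rightarrow> real) \<Rightarrow> (real \<Rightarrow> real) \<Rightarrow> bool" where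
  "Otilde_on S r g \<longleftrightarrow>
     (\<exists>c (k::nat). \<forall>\<^sub>F \<Lambda> in at_top. \<Lambda> \<in> S \<longrightarrow> r \<Lambda> \<le> c * (ln \<Lambda>) ^ k * g \<Lambda>)"

definition expOtilde_on :: "real set \<Rightarrow> (real \<Rightarrow> real) \<Rightarrow> (real \<Rightarrow> real) \<Rightarrow> bool" where
  "expOtilde_on S r g \<longleftrightarrow>
     (\<exists>C c (k::nat). c > 0 \<and>
        (\<forall>\<^sub>F \<Lambda> in at_top. \<Lambda> \<in> S \<longrightarrow> r \<Lambda> \<le> C * exp (- c * g \<Lambda> / (ln \<Lambda>) ^ k)))"

definition expOtilde2_on :: "real set \<Rightarrow> (real \<Rightarrow> real) \<Rightarrow> (real \<Rightarrow> real) \<Rightarrow> (real \<Rightarrow> real) \<Rightarrow> bool" where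
  "expOtilde2_on S r g1 g2 \<longleftrightarrow>
     (\<exists>C1 c1 (k1::nat) C2 c2 (k2::nat). c1 > 0 \<and> c2 > 0 \<and>
        (\<forall>\<^sub>F \<Lambda> in at_top. \<Lambda> \<in> S \<longrightarrow>
           r \<Lambda> \<le> C1 * exp (- c1 * g1 \<Lambda> / (ln \<Lambda>) ^ k1) + C2 * exp (- c2 * g2 \<Lambda> / (ln \<Lambda>) ^ k2)))"

end

theory Submission
  imports Defs "HOL-Real_Asymp.Real_Asymp"
begin

definition lev :: "nat \<Rightarrow> nat \<Rightarrow> nat \<Rightarrow> nat" where
  "lev Lt h m = nat \<lfloor>ln (real Lt / real (h * m))\<rfloor>"

definition good :: "nat \<Rightarrow> kstate \<Rightarrow> bool" where
  "good K st \<longleftrightarrow> finite (fst st) \<and> (\<forall>h i j. (h, i, j) \<in> fst st \<longrightarrow> i < K ^ h)"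

lemma open_good:
  assumes "good K st" "i < K ^ h"
  shows "good K (open_cell K h i j st)"
proof -
  have fin: "finite {(Suc h, K * i + l, j') | l j'. l < K \<and> j' \<le> j}"
  proof -
    have "{(Suc h, K * i + l, j') | l j'. l < K \<and> j' \<le> j} = (\<lambda>(l, j'). (Suc h, K * i + l, j')) ` ({..<K} \<times> {..j})"
      by auto
    then show ?thesis by simp
  qed
  have lt: "K * i + l < K ^ Suc h" if "l < K" for l
  proof -
    have "K * i + l < K * i + K" using that by simp
    also have "\<dots> = K * (i + 1)" by simp
    also have "\<dots> \<le> K * K ^ h" using assms(2) by (intro mult_le_mono2) simp
    finally show ?thesis by simp
  qed
  show ?thesis using assms fin lt unfolding good_def open_cell_def by auto
qed

lemma good_empty: "good K ({}, {})" by (simp add: good_def)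

lemma fval_split: "(\<lambda>(h', i). fval fz zc xr h' i j) (h, i) = fval fz zc xr h i j" by simp

context
  fixes K :: nat and fz :: "real \<Rightarrow> 'x \<Rightarrow> real" and zc :: "real \<Rightarrow> real" and xr :: "nat \<Rightarrow> nat \<Rightarrow> 'x"
    and selc :: "(nat \<times> nat) set \<Rightarrow> ((nat \<times> nat) \<Rightarrow> real) \<Rightarrow> nat \<times> nat" and Lt :: nat
  assumes vs: "valid_sel selc"
begin

abbreviation "stp \<equiv> kometo_step K fz zc xr selc Lt"

lemma cand_fin:
  assumes "good K st"
  shows "finite {(h', i). h' = h \<and> (h, i) \<notin> snd st \<and> (h, i, j) \<in> fst st}"
proof -
  have "{(h', i). h' = h \<and> (h, i) \<notin> snd st \<and> (h, i, j) \<in> fst st} \<subseteq> {h} \<times> {..<K ^ h}"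
    using assms by (auto simp: good_def)
  then show ?thesis by (rule finite_subset) simp
qed

lemma step_any:
  assumes "good K st"
  shows "stp st (h, m) = st \<or> (\<exists>i. (h, i, lev Lt h m) \<in> fst st \<and> (h, i) \<notin> snd st \<and>
            stp st (h, m) = open_cell K h i (lev Lt h m) st)"
proof -
  define j where "j = lev Lt h m"
  define Cand where "Cand = {(h', i). h' = h \<and> (h, i) \<notin> snd st \<and> (h, i, j) \<in> fst st}"
  have eq: "stp st (h, m) = (if Cand = {} then st else open_cell K h (snd (selc Cand (\<lambda>(h', i). fval fz zc xr h' i j))) j st)"
    by (simp only: kometo_step_def Let_def Cand_def j_def lev_def fst_conv snd_conv)
  show ?thesis
  proof (cases "Cand = {}")
    case True then show ?thesis using eq by simp
  next
    case False
    have fin: "finite Cand" unfolding Cand_def by (rule cand_fin[OF assms])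
    have "selc Cand (\<lambda>(h', i). fval fz zc xr h' i j) \<in> Cand"
      using vs fin False unfolding valid_sel_def by blast
    then obtain i where si: "selc Cand (\<lambda>(h', i). fval fz zc xr h' i j) = (h, i)" and "(h, i) \<notin> snd st" "(h, i, j) \<in> fst st"
      unfolding Cand_def by auto
    then show ?thesis using eq False unfolding j_def by auto
  qed
qed

lemma step_open:
  assumes "good K st" "(h, i0, lev Lt h m) \<in> fst st" "(h, i0) \<notin> snd st"
  shows "\<exists>i. (h, i, lev Lt h m) \<in> fst st \<and> (h, i) \<notin> snd st \<and>
            fval fz zc xr h i0 (lev Lt h m) \<le> fval fz zc xr h i (lev Lt h m) \<and>
            stp st (h, m) = open_cell K h i (lev Lt h m) st"
proof -
  define j where "j = lev Lt h m"
  define Cand where "Cand = {(h', i). h' = h \<and> (h, i) \<notin> snd st \<and> (h, i, j) \<in> fst st}"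
  have eq: "stp st (h, m) = (if Cand = {} then st else open_cell K h (snd (selc Cand (\<lambda>(h', i). fval fz zc xr h' i j))) j st)"
    by (simp only: kometo_step_def Let_def Cand_def j_def lev_def fst_conv snd_conv)
  have inC: "(h, i0) \<in> Cand" using assms unfolding Cand_def j_def by auto
  then have False': "Cand \<noteq> {}" by auto
  have fin: "finite Cand" unfolding Cand_def by (rule cand_fin[OF assms(1)])
  have sel: "selc Cand (\<lambda>(h', i). fval fz zc xr h' i j) \<in> Cand"
     "\<forall>y\<in>Cand. (\<lambda>(h', i). fval fz zc xr h' i j) y \<le> (\<lambda>(h', i). fval fz zc xr h' i j) (selc Cand (\<lambda>(h', i). fval fz zc xr h' i j))"
    using vs fin False' unfolding valid_sel_def by blast+
  then obtain i where si: "selc Cand (\<lambda>(h', i). fval fz zc xr h' i j) = (h, i)" and "(h, i) \<notin> snd st" "(h, i, j) \<in> fst st"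
    unfolding Cand_def by auto
  moreover have "fval fz zc xr h i0 j \<le> fval fz zc xr h i j" using sel(2) inC si by fastforce
  ultimately show ?thesis using eq False' unfolding j_def by auto
qed

lemma step_good: "good K st \<Longrightarrow> good K (stp st s)"
proof -
  assume g: "good K st"
  obtain h m where s: "s = (h, m)" by (cases s)
  from step_any[OF g, of h m] show ?thesis
  proof
    assume "stp st (h, m) = st" then show ?thesis using g s by simp
  next
    assume "\<exists>i. (h, i, lev Lt h m) \<in> fst st \<and> (h, i) \<notin> snd st \<and> stp st (h, m) = open_cell K h i (lev Lt h m) st"
    then obtain i where "(h, i, lev Lt h m) \<in> fst st" "stp st (h, m) = open_cell K h i (lev Lt h m) st" by blast
    moreover have "i < K ^ h" using g calculation(1) by (auto simp: good_def)
    ultimately show ?thesis using open_good[OF g] s by simp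
  qed
qed

lemma step_form: "stp st (h, m) = st \<or> (\<exists>i j. stp st (h, m) = open_cell K h i j st)"
proof -
  define j where "j = lev Lt h m"
  define Cand where "Cand = {(h', i). h' = h \<and> (h, i) \<notin> snd st \<and> (h, i, j) \<in> fst st}"
  have eq: "stp st (h, m) = (if Cand = {} then st else open_cell K h (snd (selc Cand (\<lambda>(h', i). fval fz zc xr h' i j))) j st)"
    by (simp only: kometo_step_def Let_def Cand_def j_def lev_def fst_conv snd_conv)
  show ?thesis by (cases "Cand = {}") (use eq in auto)
qed

lemma open_snd: "snd (open_cell K' h i j st) = insert (h, i) (snd st)"
  by (simp add: open_cell_def)
lemma open_fst_mono: "fst st \<subseteq> fst (open_cell K' h i j st)"
  by (simp add: open_cell_def)

lemma step_mono: "fst st \<subseteq> fst (stp st s) \<and> snd st \<subseteq> snd (stp st s)"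
proof -
  obtain h m where s: "s = (h, m)" by (cases s)
  from step_form[of st h m] show ?thesis
  proof
    assume "stp st (h, m) = st" then show ?thesis using s by simp
  next
    assume "\<exists>i j. stp st (h, m) = open_cell K h i j st"
    then obtain i j where "stp st (h, m) = open_cell K h i j st" by blast
    then show ?thesis using s open_fst_mono[of st K h i j] open_snd[of K h i j st] by auto
  qed
qed

lemma step_depth: "snd (stp st (h, m)) \<subseteq> snd st \<union> {h} \<times> UNIV"
proof -
  from step_form[of st h m] show ?thesis
  proof
    assume "stp st (h, m) = st" then show ?thesis by simp
  next
    assume "\<exists>i j. stp st (h, m) = open_cell K h i j st"
    then obtain i j where "stp st (h, m) = open_cell K h i j st" by blast
    then show ?thesis using open_snd[of K h i j st] by auto
  qed
qed

lemma foldl_good: "good K st \<Longrightarrow> good K (foldl stp st xs)"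
proof (induction xs arbitrary: st)
  case Nil then show ?case by simp
next
  case (Cons a xs) then show ?case using step_good[of st a] by simp
qed

lemma foldl_mono: "fst st \<subseteq> fst (foldl stp st xs) \<and> snd st \<subseteq> snd (foldl stp st xs)"
proof (induction xs arbitrary: st)
  case Nil then show ?case by simp
next
  case (Cons a xs)
  have 1: "fst st \<subseteq> fst (stp st a) \<and> snd st \<subseteq> snd (stp st a)" by (rule step_mono)
  have 2: "fst (stp st a) \<subseteq> fst (foldl stp (stp st a) xs) \<and> snd (stp st a) \<subseteq> snd (foldl stp (stp st a) xs)"
    by (rule Cons.IH)
  have 3: "foldl stp st (a # xs) = foldl stp (stp st a) xs" by simp
  show ?case unfolding 3 using 1 2 by (meson subset_trans)
qed

lemma foldl_depth: "snd (foldl stp st (map (\<lambda>m. (h, m)) ms)) \<subseteq> snd st \<union> {h} \<times> UNIV"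
proof (induction ms arbitrary: st)
  case Nil then show ?case by simp
next
  case (Cons a ms)
  have 1: "snd (stp st (h, a)) \<subseteq> snd st \<union> {h} \<times> UNIV" by (rule step_depth)
  have 2: "snd (foldl stp (stp st (h, a)) (map (\<lambda>m. (h, m)) ms)) \<subseteq> snd (stp st (h, a)) \<union> {h} \<times> UNIV"
    by (rule Cons.IH)
  have 3: "foldl stp st (map (\<lambda>m. (h, m)) (a # ms)) = foldl stp (stp st (h, a)) (map (\<lambda>m. (h, m)) ms)" by simp
  show ?case unfolding 3 using 1 2 by blast
qed

lemma open_fst_mem: "l' < K' \<Longrightarrow> j' \<le> j \<Longrightarrow> (Suc h, K' * i + l', j') \<in> fst (open_cell K' h i j st)"
  unfolding open_cell_def by simp

definition NearOpen :: "nat \<Rightarrow> nat \<Rightarrow> nat \<Rightarrow> kstate \<Rightarrow> nat set" where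
  "NearOpen h oh j st = {i. i < K ^ h \<and> (h, i) \<in> snd st \<and> fval fz zc xr h oh j \<le> fval fz zc xr h i j}"

definition Inv :: "nat \<Rightarrow> nat \<Rightarrow> nat \<Rightarrow> nat \<Rightarrow> kstate \<Rightarrow> nat \<Rightarrow> nat list \<Rightarrow> bool" where
  "Inv h oh oh1 j st c ms \<longleftrightarrow> (Suc h, oh1, j) \<in> fst st \<or>
     (c \<le> card (NearOpen h oh j st) \<and> ((h, oh) \<in> snd st \<longrightarrow> (\<forall>m\<in>set ms. lev Lt h m \<noteq> j)))"

lemma NearOpen_fin: "finite (NearOpen h oh j st)"
  by (rule finite_subset[of _ "{..<K ^ h}"]) (auto simp: NearOpen_def)

lemma NearOpen_mono: "snd st \<subseteq> snd st' \<Longrightarrow> card (NearOpen h oh j st) \<le> card (NearOpen h oh j st')"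
  by (rule card_mono[OF NearOpen_fin]) (auto simp: NearOpen_def)

lemma depth_inv:
  assumes "oh1 = K * oh + l0" "l0 < K"
  shows "sorted_wrt (\<lambda>a b. lev Lt h b \<le> lev Lt h a) ms \<Longrightarrow> good K st \<Longrightarrow> (h, oh, j) \<in> fst st \<Longrightarrow>
    Inv h oh oh1 j st c ms \<Longrightarrow>
    Inv h oh oh1 j (foldl stp st (map (\<lambda>m. (h, m)) ms)) (c + length (filter (\<lambda>m. lev Lt h m = j) ms)) []"
proof (induction ms arbitrary: st c)
  case Nil
  then show ?case by (auto simp: Inv_def)
next
  case (Cons m ms)
  define st' where "st' = stp st (h, m)"
  define l where "l = lev Lt h m"
  define c' where "c' = c + (if l = j then 1 else 0)"
  have g': "good K st'" unfolding st'_def by (rule step_good[OF Cons.prems(2)])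
  have mono': "fst st \<subseteq> fst st'" "snd st \<subseteq> snd st'" using step_mono[of st "(h, m)"] unfolding st'_def by auto
  have oh': "(h, oh, j) \<in> fst st'" using Cons.prems(3) mono' by auto
  have sw: "sorted_wrt (\<lambda>a b. lev Lt h b \<le> lev Lt h a) ms" and below: "\<forall>x\<in>set ms. lev Lt h x \<le> l"
    using Cons.prems(1) unfolding l_def by auto
  have cardmono: "card (NearOpen h oh j st) \<le> card (NearOpen h oh j st')" by (rule NearOpen_mono[OF mono'(2)])
  have flag: "(Suc h, oh1, j) \<in> fst (open_cell K h oh l' st)" if "j \<le> l'" for l'
    unfolding assms(1) by (rule open_fst_mem[OF assms(2) that])
  have inv': "Inv h oh oh1 j st' c' ms"
  proof (cases "(Suc h, oh1, j) \<in> fst st")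
    case True
    then show ?thesis using mono' by (auto simp: Inv_def)
  next
    case False
    then have cle: "c \<le> card (NearOpen h oh j st)"
      and imp: "(h, oh) \<in> snd st \<Longrightarrow> (\<forall>m'\<in>set (m # ms). lev Lt h m' \<noteq> j)"
      using Cons.prems(4) by (auto simp: Inv_def)
    consider (eq) "l = j" | (lt) "l < j" | (gt) "l > j" by linarith
    then show ?thesis
    proof cases
      case eq
      have notin: "(h, oh) \<notin> snd st" using imp eq l_def by auto
      obtain i where i: "(h, i, l) \<in> fst st" "(h, i) \<notin> snd st"
          "fval fz zc xr h oh l \<le> fval fz zc xr h i l" "st' = open_cell K h i l st"
        using step_open[OF Cons.prems(2), of h oh m] Cons.prems(3) notin eq unfolding st'_def l_def by auto
      show ?thesis
      proof (cases "i = oh")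
        case True
        then show ?thesis using flag[of l] eq i(4) by (simp add: Inv_def)
      next
        case False
        have ik: "i < K ^ h" using Cons.prems(2) i(1) by (auto simp: good_def)
        have sub: "insert i (NearOpen h oh j st) \<subseteq> NearOpen h oh j st'"
          using i ik eq mono'(2) unfolding NearOpen_def by (auto simp: open_snd)
        have "i \<notin> NearOpen h oh j st" using i(2) by (simp add: NearOpen_def)
        then have "card (insert i (NearOpen h oh j st)) = Suc (card (NearOpen h oh j st))"
          using NearOpen_fin by simp
        then have "c' \<le> card (NearOpen h oh j st')"
          using card_mono[OF NearOpen_fin sub] cle eq unfolding c'_def by simp
        moreover have "(h, oh) \<notin> snd st'" using i(4) False notin by (simp add: open_snd)
        ultimately show ?thesis by (simp add: Inv_def)
      qed
    next
      case lt
      have "\<forall>m'\<in>set ms. lev Lt h m' \<noteq> j" using below lt by fastforce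
      then show ?thesis using cle cardmono lt unfolding c'_def Inv_def by simp
    next
      case gt
      have c'c: "c' = c" using gt unfolding c'_def by simp
      from step_any[OF Cons.prems(2), of h m] show ?thesis
      proof
        assume "stp st (h, m) = st"
        then have "st' = st" unfolding st'_def by simp
        then show ?thesis using cle imp c'c by (simp add: Inv_def)
      next
        assume "\<exists>i. (h, i, lev Lt h m) \<in> fst st \<and> (h, i) \<notin> snd st \<and> stp st (h, m) = open_cell K h i (lev Lt h m) st"
        then obtain i where i: "(h, i) \<notin> snd st" "st' = open_cell K h i l st" unfolding st'_def l_def by blast
        show ?thesis
        proof (cases "i = oh")
          case True
          then show ?thesis using flag[of l] gt i(2) by (simp add: Inv_def)
        next
          case False
          have "(h, oh) \<in> snd st' \<Longrightarrow> (h, oh) \<in> snd st" using i(2) False by (simp add: open_snd)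
          then show ?thesis using cle cardmono imp c'c by (auto simp: Inv_def)
        qed
      qed
    qed
  qed
  have "Inv h oh oh1 j (foldl stp st' (map (\<lambda>m. (h, m)) ms)) (c' + length (filter (\<lambda>m. lev Lt h m = j) ms)) []"
    by (rule Cons.IH[OF sw g' oh' inv'])
  moreover have "foldl stp st (map (\<lambda>m. (h, m)) (m # ms)) = foldl stp st' (map (\<lambda>m. (h, m)) ms)"
    unfolding st'_def by simp
  moreover have "c' + length (filter (\<lambda>m. lev Lt h m = j) ms) = c + length (filter (\<lambda>m. lev Lt h m = j) (m # ms))"
    unfolding c'_def l_def by simp
  ultimately show ?case by simp
qed

definition dl :: "nat \<Rightarrow> (nat \<times> nat) list" where
  "dl h = map (\<lambda>m. (h, m)) [1..<Lt div h + 1]"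

definition stH :: "kstate \<Rightarrow> nat \<Rightarrow> kstate" where
  "stH st0 H = foldl (\<lambda>st h. foldl stp st (dl h)) st0 [1..<H + 1]"

lemma stH_0: "stH st0 0 = st0" by (simp add: stH_def)
lemma stH_Suc: "stH st0 (Suc H) = foldl stp (stH st0 H) (dl (Suc H))"
  by (simp add: stH_def)

lemma foldl_concat': "foldl g a (concat xss) = foldl (\<lambda>st xs. foldl g st xs) a xss"
  by (induction xss arbitrary: a) auto

lemma sched_eq: "foldl stp st0 (kometo_schedule Lt) = foldl (\<lambda>st h. foldl stp st (dl h)) st0 [1..<Lt + 1]"
proof -
  have "kometo_schedule Lt = concat (map dl [1..<Lt + 1])"
    unfolding kometo_schedule_def dl_def by simp
  then show ?thesis by (simp add: foldl_concat' foldl_map)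
qed

lemma stH_final_mono:
  assumes "H \<le> Lt"
  shows "fst (stH st0 H) \<subseteq> fst (foldl stp st0 (kometo_schedule Lt))"
proof -
  have split: "[1..<Lt + 1] = [1..<H + 1] @ [H + 1..<Lt + 1]"
    using upt_add_eq_append[of 1 "H + 1" "Lt - H"] assms by simp
  have "foldl stp st0 (kometo_schedule Lt) = foldl (\<lambda>st h. foldl stp st (dl h)) (stH st0 H) [H + 1..<Lt + 1]"
    unfolding sched_eq split stH_def by simp
  also have "\<dots> = foldl stp (stH st0 H) (concat (map dl [H + 1..<Lt + 1]))"
    by (simp add: foldl_concat' foldl_map)
  finally show ?thesis using foldl_mono[of "stH st0 H"] by simp
qed

lemma stH_good: "good K st0 \<Longrightarrow> good K (stH st0 H)"
  unfolding stH_def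
proof (induction H)
  case 0 then show ?case by simp
next
  case (Suc H)
  have "good K (foldl (\<lambda>st h. foldl stp st (dl h)) st0 [1..<H + 1])" using Suc by simp
  then have "good K (foldl stp (foldl (\<lambda>st h. foldl stp st (dl h)) st0 [1..<H + 1]) (dl (Suc H)))"
    by (rule foldl_good)
  then show ?case by simp
qed

lemma stH_depth: "snd (stH st0 H) \<subseteq> snd st0 \<union> {1..H} \<times> UNIV"
proof (induction H)
  case 0 then show ?case by (simp add: stH_def)
next
  case (Suc H)
  have "snd (stH st0 (Suc H)) \<subseteq> snd (stH st0 H) \<union> {Suc H} \<times> UNIV"
    unfolding stH_Suc dl_def by (rule foldl_depth)
  moreover have "{Suc H} \<times> UNIV \<subseteq> {1..Suc H} \<times> (UNIV :: nat set)" by auto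
  moreover have "{1..H} \<times> UNIV \<subseteq> {1..Suc H} \<times> (UNIV :: nat set)" by auto
  ultimately show ?case using Suc by blast
qed

lemma lev_antimono:
  assumes "1 \<le> h" "1 \<le> a" "a \<le> b"
  shows "lev Lt h b \<le> lev Lt h a"
proof (cases "Lt = 0")
  case True then show ?thesis by (simp add: lev_def)
next
  case False
  have pos: "0 < real Lt / real (h * b)" using False assms by simp
  have "real Lt / real (h * b) \<le> real Lt / real (h * a)"
    using assms by (intro divide_left_mono) (auto simp: mult_mono)
  then have "ln (real Lt / real (h * b)) \<le> ln (real Lt / real (h * a))"
    using pos by simp
  then show ?thesis unfolding lev_def by (intro nat_mono floor_mono)
qed

lemma sorted_lev: "1 \<le> h \<Longrightarrow> sorted_wrt (\<lambda>a b. lev Lt h b \<le> lev Lt h a) [1..<N + 1]"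
  by (rule sorted_wrt_mono_rel[OF _ sorted_wrt_upt]) (auto intro: lev_antimono)

lemma depth_step:
  assumes "ot1 = K * ot + l0" "l0 < K" "1 \<le> h"
    and g0: "good K st0" and dep0: "snd st0 = {(0, 0)}"
    and prev: "(h, ot, j) \<in> fst (stH st0 (h - 1))"
    and cnt: "\<And>st. card (NearOpen h ot j st) < length (filter (\<lambda>m. lev Lt h m = j) [1..<Lt div h + 1])"
  shows "(Suc h, ot1, j) \<in> fst (stH st0 h)"
proof -
  define S where "S = stH st0 (h - 1)"
  have hh: "h = Suc (h - 1)" using assms(3) by simp
  have hS: "stH st0 h = foldl stp S (dl h)" unfolding S_def
    by (subst hh, subst stH_Suc) (simp only: hh[symmetric])
  have gS: "good K S" unfolding S_def by (rule stH_good[OF g0])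
  have "snd S \<subseteq> {(0, 0)} \<union> {1..h - 1} \<times> UNIV" unfolding S_def using stH_depth[of st0 "h - 1"] dep0 by simp
  then have notin: "(h, ot) \<notin> snd S" using assms(3) by auto
  have inv0: "Inv h ot ot1 j S 0 [1..<Lt div h + 1]" using notin by (simp add: Inv_def)
  have "Inv h ot ot1 j (foldl stp S (map (\<lambda>m. (h, m)) [1..<Lt div h + 1]))
          (0 + length (filter (\<lambda>m. lev Lt h m = j) [1..<Lt div h + 1])) []"
    by (rule depth_inv[OF assms(1,2) sorted_lev[OF assms(3)] gS prev[folded S_def] inv0])
  then have "Inv h ot ot1 j (stH st0 h) (length (filter (\<lambda>m. lev Lt h m = j) [1..<Lt div h + 1])) []"
    unfolding hS dl_def by simp
  then show ?thesis using cnt[of "stH st0 h"] unfolding Inv_def by auto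
qed

lemma path_claim:
  assumes ot0: "ot 0 = 0" and otS: "\<And>h. \<exists>l<K. ot (Suc h) = K * ot h + l"
    and st0: "st0 = open_cell K 0 0 jmax ({}, {})" and j: "j \<le> jmax"
    and cnt: "\<And>h st. 1 \<le> h \<Longrightarrow> h \<le> H \<Longrightarrow> card (NearOpen h (ot h) j st) < length (filter (\<lambda>m. lev Lt h m = j) [1..<Lt div h + 1])"
  shows "h \<le> H \<Longrightarrow> (Suc h, ot (Suc h), j) \<in> fst (stH st0 h)"
proof (induction h)
  case 0
  obtain l where l: "l < K" "ot (Suc 0) = K * ot 0 + l" using otS by blast
  have "(Suc 0, K * 0 + l, j) \<in> fst (open_cell K 0 0 jmax ({}, {}))"
    by (rule open_fst_mem[OF l(1) j])
  then show ?case using l ot0 st0 by (simp add: stH_0)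
next
  case (Suc h)
  obtain l where l: "l < K" "ot (Suc (Suc h)) = K * ot (Suc h) + l" using otS by blast
  have g0: "good K st0" unfolding st0 by (rule open_good[OF good_empty]) simp
  have dep0: "snd st0 = {(0, 0)}" unfolding st0 by (simp add: open_snd)
  have prev: "(Suc h, ot (Suc h), j) \<in> fst (stH st0 (Suc h - 1))" using Suc by simp
  show ?case
    by (rule depth_step[OF l(2) l(1) _ g0 dep0 prev cnt]) (use Suc.prems in auto)
qed

end

lemma count_lb:
  fixes Lt h j :: nat
  assumes h: "1 \<le> h"
  defines "x \<equiv> real Lt / (real h * exp (real j))"
  shows "x - 1 - x / exp 1 \<le> real (length (filter (\<lambda>m. lev Lt h m = j) [1..<Lt div h + 1]))"
proof -
  have e1: "exp 1 > (1::real)" by simp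
  have xnn: "0 \<le> x" unfolding x_def by simp
  define a where "a = nat \<lfloor>x / exp 1\<rfloor>"
  define b where "b = nat \<lfloor>x\<rfloor>"
  have sub: "{Suc a..b} \<subseteq> set (filter (\<lambda>m. lev Lt h m = j) [1..<Lt div h + 1])"
  proof
    fix m assume m: "m \<in> {Suc a..b}"
    have m1: "x / exp 1 < real m"
    proof -
      have "x / exp 1 < real_of_int \<lfloor>x / exp 1\<rfloor> + 1" by linarith
      also have "\<dots> = real a + 1" unfolding a_def using xnn by simp
      also have "\<dots> \<le> real m" using m by simp
      finally show ?thesis .
    qed
    have m2: "real m \<le> x"
    proof -
      have "real m \<le> real b" using m by simp
      also have "\<dots> \<le> x" unfolding b_def using xnn by linarith
      finally show ?thesis .
    qed
    have "0 \<le> x / exp 1" using xnn by simp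
    then have "0 < real m" using m1 by linarith
    then have mpos: "0 < m" by simp
    have hm: "0 < real h * real m" using h mpos by simp
    have ej: "exp (real j) \<le> real Lt / (real h * real m)"
    proof -
      have hp: "0 < real h * exp (real j)" using h by simp
      have "real m * (real h * exp (real j)) \<le> real Lt" using m2 hp unfolding x_def
        by (simp add: le_divide_eq)
      then show ?thesis using hm by (simp add: field_simps le_divide_eq)
    qed
    have ej2: "real Lt / (real h * real m) < exp (real j + 1)"
    proof -
      have "real Lt / (real h * exp (real j) * exp 1) < real m" using m1 unfolding x_def by (simp add: field_simps)
      then have "real Lt < real m * (real h * exp (real j) * exp 1)" using h by (simp add: divide_less_eq)
      then show ?thesis using hm by (simp add: divide_less_eq exp_add field_simps)
    qed
    have lpos: "0 < real Lt / (real h * real m)" using ej by (metis exp_gt_zero less_le_trans)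
    have "real j \<le> ln (real Lt / (real h * real m))" using ej lpos by (simp add: ln_ge_iff)
    moreover have "ln (real Lt / (real h * real m)) < real j + 1"
    proof -
      have "ln (real Lt / (real h * real m)) < ln (exp (real j + 1))"
        using ej2 lpos by (subst ln_less_cancel_iff) auto
      then show ?thesis by simp
    qed
    ultimately have "\<lfloor>ln (real Lt / (real h * real m))\<rfloor> = int j" by linarith
    then have lv: "lev Lt h m = j" unfolding lev_def by simp
    have "1 \<le> exp (real j)" by simp
    then have "1 \<le> real Lt / (real h * real m)" using ej by linarith
    then have "real h * real m \<le> real Lt" using hm by (simp add: le_divide_eq)
    then have "real m * real h \<le> real Lt" by (simp add: mult.commute)
    then have "m * h \<le> Lt" by (simp only: of_nat_mult[symmetric] of_nat_le_iff)
    then have "m \<le> Lt div h" using h by (simp add: less_eq_div_iff_mult_less_eq)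
    then have "m \<in> {1..<Lt div h + 1}" using mpos by simp
    then show "m \<in> set (filter (\<lambda>m. lev Lt h m = j) [1..<Lt div h + 1])"
      unfolding set_filter set_upt using lv by blast
  qed
  have "card {Suc a..b} \<le> card (set (filter (\<lambda>m. lev Lt h m = j) [1..<Lt div h + 1]))"
    by (rule card_mono[OF _ sub]) simp
  also have "\<dots> \<le> length (filter (\<lambda>m. lev Lt h m = j) [1..<Lt div h + 1])" by (rule card_length)
  finally have c: "b - a \<le> length (filter (\<lambda>m. lev Lt h m = j) [1..<Lt div h + 1])" by simp
  have "x \<le> x * exp 1" using xnn e1 by (simp add: mult_le_cancel_left1)
  then have "x / exp 1 \<le> x" by (simp add: divide_le_eq)
  then have ab: "a \<le> b" unfolding a_def b_def by (intro nat_mono floor_mono)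
  have "x - 1 - x / exp 1 \<le> real b - real a"
    unfolding a_def b_def using xnn by (simp; linarith)
  also have "\<dots> = real (b - a)" using ab by simp
  finally show ?thesis using c by linarith
qed

lemma child_lt: fixes i K l h :: nat shows "i < K ^ h \<Longrightarrow> l < K \<Longrightarrow> K * i + l < K ^ Suc h"
proof -
  assume a: "i < K ^ h" "l < K"
  have "K * i + l < K * i + K" using a(2) by linarith
  also have "\<dots> = K * (i + 1)" by simp
  also have "\<dots> \<le> K * K ^ h" using a by (intro mult_le_mono2) simp
  finally show ?thesis by simp
qed

lemma xr_in: "hier_part K P xr \<Longrightarrow> i < K ^ h \<Longrightarrow> xr h i \<in> P h i"
  unfolding hier_part_def by blast

lemma cmp_fid:
  assumes zg: "\<forall>z\<in>{0..1}. strict_mono (g z :: real \<Rightarrow> real) \<and> (\<forall>x. \<bar>f x - g z (fz z x)\<bar> \<le> \<zeta> z)"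
    and z: "z \<in> {0..1}" and le: "fz z a \<le> fz z b"
  shows "f a \<le> f b + 2 * \<zeta> z"
proof -
  have sm: "strict_mono (g z)" and b: "\<And>x. \<bar>f x - g z (fz z x)\<bar> \<le> \<zeta> z" using zg z by auto
  have "g z (fz z a) \<le> g z (fz z b)" using le sm by (simp add: strict_mono_less_eq)
  moreover have "f a \<le> g z (fz z a) + \<zeta> z" using b[of a] by linarith
  moreover have "g z (fz z b) \<le> f b + \<zeta> z" using b[of b] by linarith
  ultimately show ?thesis by linarith
qed

lemma powr_exp_form: "0 < \<rho> \<Longrightarrow> \<rho> powr (- d * real h) = exp (d * real h * (- ln \<rho>))"
  by (simp add: powr_def)

lemma kometo_bound:
  fixes K :: nat and P :: "nat \<Rightarrow> nat \<Rightarrow> 'x set" and xr :: "nat \<Rightarrow> nat \<Rightarrow> 'x"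
    and \<nu> \<rho> d C :: real and f :: "'x \<Rightarrow> real" and xs :: 'x
    and fz :: "real \<Rightarrow> 'x \<Rightarrow> real" and lam zc \<zeta> :: "real \<Rightarrow> real" and g :: "real \<Rightarrow> real \<Rightarrow> real"
    and selc :: "(nat \<times> nat) set \<Rightarrow> ((nat \<times> nat) \<Rightarrow> real) \<Rightarrow> nat \<times> nat"
    and selj :: "nat set \<Rightarrow> (nat \<Rightarrow> real) \<Rightarrow> nat" and \<Lambda> :: real and H j :: nat
  assumes part: "hier_part K P xr"
    and fmax: "\<forall>x. f x \<le> f xs"
    and fpath: "\<forall>h i. i < K ^ h \<and> xs \<in> P h i \<longrightarrow> (\<forall>x\<in>P h i. f x \<ge> f xs - \<nu> * \<rho> ^ h)"
    and fcnt: "\<forall>h. real (card {i. i < K ^ h \<and> (SUP x\<in>P h i. f x) \<ge> f xs - 3 * \<nu> * \<rho> ^ h})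
               \<le> C * \<rho> powr (- d * real h)"
    and pars: "\<nu> > 0" "0 < \<rho>" "\<rho> < 1" "C > 1" "d \<ge> 0"
    and fid: "fidelities_ok lam zc"
    and zg: "\<forall>z\<in>{0..1}. strict_mono (g z :: real \<Rightarrow> real) \<and> (\<forall>x. \<bar>f x - g z (fz z x)\<bar> \<le> \<zeta> z)"
    and vs: "valid_sel selc" "valid_sel selj"
    and Lt1: "1 \<le> Lambda_tilde K \<Lambda>"
    and ej: "exp (real j) \<le> real (Lambda_tilde K \<Lambda>)"
    and zj: "\<zeta> (zc (exp (real j))) \<le> \<nu> * \<rho> ^ H"
    and cond: "4 * C * real H * exp (real j) * \<rho> powr (- d * real H) \<le> real (Lambda_tilde K \<Lambda>)"
  shows "f xs - f (kometo K fz zc xr selc selj \<Lambda>) \<le> 3 * \<nu> * \<rho> ^ H + 2 * \<zeta> (zc (real (Lambda_tilde K \<Lambda>)))"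
proof -
  define Lt where "Lt = Lambda_tilde K \<Lambda>"
  define jmax where "jmax = nat \<lfloor>ln (real Lt)\<rfloor>"
  define st0 where "st0 = open_cell K 0 0 jmax ({}, {})"
  define st where "st = foldl (kometo_step K fz zc xr selc Lt) st0 (kometo_schedule Lt)"
  define xc where "xc = (\<lambda>j. case selc {(h, i). (h, i, j) \<in> fst st} (\<lambda>(h, i). fval fz zc xr h i j) of
                        (h, i) \<Rightarrow> xr h i)"
  define jstar where "jstar = selj {..jmax} (\<lambda>j. fz (zc (real Lt)) (xc j))"
  have kdef: "kometo K fz zc xr selc selj \<Lambda> = xc jstar"
    unfolding kometo_def Let_def jstar_def xc_def st_def st0_def jmax_def Lt_def by simp
  have K2: "2 \<le> K" using part by (simp add: hier_part_def)
  define sel where "sel = (\<lambda>h i. SOME l. l < K \<and> xs \<in> P (Suc h) (K * i + l))"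
  define ot where "ot = rec_nat 0 (\<lambda>h oh. K * oh + sel h oh)"
  have ot0: "ot 0 = 0" unfolding ot_def by simp
  have otS': "ot (Suc h) = K * ot h + sel h (ot h)" for h unfolding ot_def by simp
  have otp: "ot h < K ^ h \<and> xs \<in> P h (ot h) \<and> (h > 0 \<longrightarrow> sel (h - 1) (ot (h - 1)) < K)" for h
  proof (induction h)
    case 0 then show ?case using part ot0 by (simp add: hier_part_def)
  next
    case (Suc h)
    have "P h (ot h) = (\<Union>l<K. P (Suc h) (K * ot h + l))" using part Suc by (simp add: hier_part_def)
    then have "\<exists>l. l < K \<and> xs \<in> P (Suc h) (K * ot h + l)" using Suc by auto
    then have s: "sel h (ot h) < K \<and> xs \<in> P (Suc h) (K * ot h + sel h (ot h))"
      unfolding sel_def by (rule someI_ex)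
    then show ?case using child_lt[of "ot h" K h "sel h (ot h)"] Suc otS'[of h] by simp
  qed
  have otS: "\<exists>l<K. ot (Suc h) = K * ot h + l" for h using otp[of "Suc h"] otS'[of h] by auto
  have e2: "2 \<le> exp (1::real)" using exp_ge_add_one_self[of 1] by simp
  define L where "L = - ln \<rho>"
  have Lpos: "0 < L" unfolding L_def using pars by simp
  have pw: "\<rho> powr (- d * real h) = exp (d * real h * L)" for h unfolding L_def using pars(2) by (rule powr_exp_form)
  have zin: "zc c \<in> {0..1}" if "1 \<le> c" for c using fid that by (simp add: fidelities_ok_def)
  have zjin: "zc (exp (real j)) \<in> {0..1}" by (rule zin) simp
  have fxr: "f xs - \<nu> * \<rho> ^ h \<le> f (xr h (ot h))" for h
  proof -
    have "xr h (ot h) \<in> P h (ot h)" using otp[of h] by (intro xr_in[OF part]) simp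
    then show ?thesis using fpath otp[of h] by blast
  qed
  have HLt: "H \<le> Lt"
  proof -
    have "1 \<le> 4 * C * exp (real j) * \<rho> powr (- d * real H)"
    proof -
      have "1 \<le> exp (real j)" by simp
      moreover have "1 \<le> \<rho> powr (- d * real H)" unfolding pw using pars Lpos by simp
      ultimately have "1 \<le> exp (real j) * \<rho> powr (- d * real H)" using mult_mono[of 1 "exp (real j)" 1 "\<rho> powr (- d * real H)"] by simp
      then show ?thesis using pars(4) by (smt (verit) mult_le_cancel_right1 mult.assoc)
    qed
    then have "real H \<le> real H * (4 * C * exp (real j) * \<rho> powr (- d * real H))"
      by (simp add: mult_le_cancel_left1)
    also have "\<dots> \<le> real Lt" using cond unfolding Lt_def by (simp add: ac_simps)
    finally show ?thesis by simp
  qed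
  have jj: "j \<le> jmax"
  proof -
    have "0 < real Lt" using Lt1 unfolding Lt_def by simp
    then have "real j \<le> ln (real Lt)" using ej unfolding Lt_def by (simp add: ln_ge_iff)
    then show ?thesis unfolding jmax_def by linarith
  qed
  have cnt: "card (NearOpen K fz zc xr h (ot h) j st') < length (filter (\<lambda>m. lev Lt h m = j) [1..<Lt div h + 1])"
    if h: "1 \<le> h" "h \<le> H" for h st'
  proof -
    define NS where "NS = {i. i < K ^ h \<and> (SUP x\<in>P h i. f x) \<ge> f xs - 3 * \<nu> * \<rho> ^ h}"
    have rh: "\<rho> ^ H \<le> \<rho> ^ h" using h pars by (intro power_decreasing) auto
    have sub: "NearOpen K fz zc xr h (ot h) j st' \<subseteq> NS"
    proof
      fix i assume i: "i \<in> NearOpen K fz zc xr h (ot h) j st'"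
      have ik: "i < K ^ h" using i unfolding NearOpen_def[OF vs(1)] by simp
      have fv: "fval fz zc xr h (ot h) j \<le> fval fz zc xr h i j" using i unfolding NearOpen_def[OF vs(1)] by simp
      have "f (xr h (ot h)) \<le> f (xr h i) + 2 * \<zeta> (zc (exp (real j)))"
        by (rule cmp_fid[OF zg zjin]) (use fv in \<open>simp add: fval_def\<close>)
      moreover have "\<nu> * \<rho> ^ H \<le> \<nu> * \<rho> ^ h" using rh pars by (simp add: mult_left_mono)
      ultimately have fi: "f xs - 3 * \<nu> * \<rho> ^ h \<le> f (xr h i)" using fxr[of h] zj by linarith
      have "xr h i \<in> P h i" using ik by (rule xr_in[OF part])
      moreover have "bdd_above (f ` P h i)" using fmax by (intro bdd_aboveI[of _ "f xs"]) auto
      ultimately have "f (xr h i) \<le> (SUP x\<in>P h i. f x)" by (rule cSUP_upper)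
      then show "i \<in> NS" unfolding NS_def using ik fi by simp
    qed
    have finNS: "finite NS" unfolding NS_def by (rule finite_subset[of _ "{..<K ^ h}"]) auto
    have "real (card (NearOpen K fz zc xr h (ot h) j st')) \<le> real (card NS)"
      using card_mono[OF finNS sub] by simp
    also have "\<dots> \<le> C * exp (d * real h * L)" using fcnt unfolding NS_def pw by blast
    also have "\<dots> < real (length (filter (\<lambda>m. lev Lt h m = j) [1..<Lt div h + 1]))"
    proof -
      define y where "y = C * exp (d * real h * L)"
      define x where "x = real Lt / (real h * exp (real j))"
      have "1 \<le> exp (d * real h * L)" using pars Lpos by simp
      then have "C * 1 \<le> C * exp (d * real h * L)" using pars(4) by (intro mult_left_mono) auto
      then have y1: "1 < y" unfolding y_def using pars(4) by linarith
      have hp: "0 < real h * exp (real j)" using h by simp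
      have "4 * y * (real h * exp (real j)) \<le> real Lt"
      proof -
        have "exp (d * real h * L) \<le> exp (d * real H * L)" using h pars Lpos by (simp add: mult_right_mono mult_left_mono)
        then have a1: "4 * y \<le> 4 * C * exp (d * real H * L)" unfolding y_def using pars by simp
        have a2: "real h * exp (real j) \<le> real H * exp (real j)" using h by (intro mult_right_mono) auto
        have "4 * y * (real h * exp (real j)) \<le> 4 * C * exp (d * real H * L) * (real H * exp (real j))"
          by (rule mult_mono[OF a1 a2]) (use pars in auto)
        also have "\<dots> \<le> real Lt" using cond unfolding pw Lt_def by (simp add: ac_simps)
        finally show ?thesis .
      qed
      then have x4: "4 * y \<le> x" unfolding x_def using hp by (simp add: le_divide_eq)
      have "x / exp 1 \<le> x / 2" using e2 x4 y1 by (intro divide_left_mono) auto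
      then have "y < x - 1 - x / exp 1" using x4 y1 by linarith
      also have "\<dots> \<le> real (length (filter (\<lambda>m. lev Lt h m = j) [1..<Lt div h + 1]))"
        unfolding x_def by (rule count_lb[OF h(1)])
      finally show ?thesis unfolding y_def .
    qed
    finally show ?thesis by simp
  qed
  have path: "(Suc H, ot (Suc H), j) \<in> fst (stH K fz zc xr selc Lt st0 H)"
    by (rule path_claim[OF vs(1) ot0 otS st0_def jj cnt]) auto
  have inst: "(Suc H, ot (Suc H), j) \<in> fst st"
    using stH_final_mono[OF vs(1) HLt, of K fz zc xr st0] path unfolding st_def by blast
  have g0: "good K st0" unfolding st0_def by (rule open_good[OF good_empty]) simp
  have gst: "good K st" unfolding st_def by (rule foldl_good[OF vs(1) g0])
  define Sj where "Sj = {(h, i). (h, i, j) \<in> fst st}"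
  have finSj: "finite Sj"
  proof -
    have "Sj \<subseteq> (\<lambda>(h, i, j). (h, i)) ` fst st" unfolding Sj_def by force
    moreover have "finite (fst st)" using gst by (simp add: good_def)
    ultimately show ?thesis by (meson finite_imageI finite_subset)
  qed
  have inSj: "(Suc H, ot (Suc H)) \<in> Sj" using inst unfolding Sj_def by simp
  have selS: "selc Sj (\<lambda>(h, i). fval fz zc xr h i j) \<in> Sj"
      "\<forall>y\<in>Sj. (\<lambda>(h, i). fval fz zc xr h i j) y \<le> (\<lambda>(h, i). fval fz zc xr h i j) (selc Sj (\<lambda>(h, i). fval fz zc xr h i j))"
    using vs(1) finSj inSj unfolding valid_sel_def by blast+
  obtain hs ix where hs: "selc Sj (\<lambda>(h, i). fval fz zc xr h i j) = (hs, ix)" by fastforce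
  have xcj: "xc j = xr hs ix" unfolding xc_def using hs unfolding Sj_def by simp
  have "fval fz zc xr (Suc H) (ot (Suc H)) j \<le> fval fz zc xr hs ix j" using selS(2) inSj hs by fastforce
  then have "f (xr (Suc H) (ot (Suc H))) \<le> f (xc j) + 2 * \<zeta> (zc (exp (real j)))"
    unfolding xcj by (intro cmp_fid[OF zg zjin]) (simp add: fval_def)
  moreover have "\<rho> ^ Suc H \<le> \<rho> ^ H" using pars by (intro power_decreasing) auto
  moreover have "\<nu> * \<rho> ^ Suc H \<le> \<nu> * \<rho> ^ H" using calculation(2) pars by (simp add: mult_left_mono)
  ultimately have fxc: "f xs - f (xc j) \<le> 3 * \<nu> * \<rho> ^ H" using fxr[of "Suc H"] zj by linarith
  have jin: "j \<in> {..jmax}" using jj by simp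
  have "fz (zc (real Lt)) (xc j) \<le> fz (zc (real Lt)) (xc jstar)"
    using vs(2) jin unfolding valid_sel_def jstar_def by (metis empty_iff finite_atMost)
  then have "f (xc j) \<le> f (xc jstar) + 2 * \<zeta> (zc (real Lt))"
    by (intro cmp_fid[OF zg]) (use Lt1 zin in \<open>auto simp: Lt_def\<close>)
  then show ?thesis using fxc unfolding kdef Lt_def by linarith
qed

lemma ex_sel: "\<exists>sel :: 'a set \<Rightarrow> ('a \<Rightarrow> real) \<Rightarrow> 'a. valid_sel sel"
proof -
  define sel where "sel = (\<lambda>(S :: 'a set) (\<phi> :: 'a \<Rightarrow> real). SOME x. x \<in> S \<and> (\<forall>y\<in>S. \<phi> y \<le> \<phi> x))"
  have "valid_sel sel" unfolding valid_sel_def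
  proof (intro allI impI)
    fix S :: "'a set" and \<phi> :: "'a \<Rightarrow> real" assume a: "finite S \<and> S \<noteq> {}"
    then have "Max (\<phi> ` S) \<in> \<phi> ` S" by (intro Max_in) auto
    then obtain x where x: "x \<in> S" "\<phi> x = Max (\<phi> ` S)" by auto
    have "\<forall>y\<in>S. \<phi> y \<le> \<phi> x" using a x by auto
    then have "\<exists>x. x \<in> S \<and> (\<forall>y\<in>S. \<phi> y \<le> \<phi> x)" using x by blast
    then show "sel S \<phi> \<in> S \<and> (\<forall>y\<in>S. \<phi> y \<le> \<phi> (sel S \<phi>))"
      unfolding sel_def by (rule someI_ex)
  qed
  then show ?thesis by blast
qed

lemma regret_le:
  fixes K :: nat and P :: "nat \<Rightarrow> nat \<Rightarrow> 'x set" and xr :: "nat \<Rightarrow> nat \<Rightarrow> 'x"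
    and \<nu> \<rho> d C :: real and f :: "'x \<Rightarrow> real"
    and fz :: "real \<Rightarrow> 'x \<Rightarrow> real" and lam zc \<zeta> :: "real \<Rightarrow> real" and g :: "real \<Rightarrow> real \<Rightarrow> real"
    and \<Lambda> :: real and H j :: nat
  assumes part: "hier_part K P xr" and par: "params_ok K \<nu> \<rho> d C" and fS: "in_S K P \<nu> \<rho> d C f"
    and fid: "fidelities_ok lam zc"
    and zg: "\<forall>z\<in>{0..1}. strict_mono (g z :: real \<Rightarrow> real) \<and> (\<forall>x. \<bar>f x - g z (fz z x)\<bar> \<le> \<zeta> z)"
    and Lt1: "1 \<le> Lambda_tilde K \<Lambda>"
    and ej: "exp (real j) \<le> real (Lambda_tilde K \<Lambda>)"
    and zj: "\<zeta> (zc (exp (real j))) \<le> \<nu> * \<rho> ^ H"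
    and cond: "4 * C * real H * exp (real j) * \<rho> powr (- d * real H) \<le> real (Lambda_tilde K \<Lambda>)"
  shows "kometo_regret K fz zc xr f \<Lambda> \<le> 3 * \<nu> * \<rho> ^ H + 2 * \<zeta> (zc (real (Lambda_tilde K \<Lambda>)))"
proof -
  obtain xs where fmax: "\<forall>x. f x \<le> f xs"
    and fpath: "\<forall>h i. i < K ^ h \<and> xs \<in> P h i \<longrightarrow> (\<forall>x\<in>P h i. f x \<ge> f xs - \<nu> * \<rho> ^ h)"
    and fcnt: "\<forall>h. real (card {i. i < K ^ h \<and> (SUP x\<in>P h i. f x) \<ge> f xs - 3 * \<nu> * \<rho> ^ h})
               \<le> C * \<rho> powr (- d * real h)"
    using fS unfolding in_S_def by blast
  have pars: "\<nu> > 0" "0 < \<rho>" "\<rho> < 1" "C > 1" "d \<ge> 0" using par by (auto simp: params_ok_def)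
  have sup: "(SUP x. f x) = f xs" using fmax by (intro cSup_eq_maximum) auto
  obtain s1 :: "(nat \<times> nat) set \<Rightarrow> ((nat \<times> nat) \<Rightarrow> real) \<Rightarrow> nat \<times> nat" where s1: "valid_sel s1"
    using ex_sel by blast
  obtain s2 :: "nat set \<Rightarrow> (nat \<Rightarrow> real) \<Rightarrow> nat" where s2: "valid_sel s2"
    using ex_sel by blast
  show ?thesis unfolding kometo_regret_def
  proof (rule cSup_least)
    show "{(SUP x. f x) - f (kometo K fz zc xr selc selj \<Lambda>) | selc selj. valid_sel selc \<and> valid_sel selj} \<noteq> {}"
      using s1 s2 by blast
  next
    fix v assume "v \<in> {(SUP x. f x) - f (kometo K fz zc xr selc selj \<Lambda>) | selc selj. valid_sel selc \<and> valid_sel selj}"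
    then obtain selc selj where v: "v = (SUP x. f x) - f (kometo K fz zc xr selc selj \<Lambda>)" "valid_sel selc" "valid_sel selj"
      by blast
    show "v \<le> 3 * \<nu> * \<rho> ^ H + 2 * \<zeta> (zc (real (Lambda_tilde K \<Lambda>)))"
      unfolding v(1) sup
      by (rule kometo_bound[OF part fmax fpath fcnt pars fid zg v(2) v(3) Lt1 ej zj cond])
  qed
qed

lemma Lt_bounds:
  fixes K :: nat assumes K: "1 \<le> K"
  shows "\<exists>\<kappa>>0. \<forall>\<^sub>F \<Lambda> in at_top. 3 \<le> \<Lambda> \<and> 1 \<le> ln \<Lambda> \<and>
            \<Lambda> / (\<kappa> * (ln \<Lambda>)^2) \<le> real (Lambda_tilde K \<Lambda>) \<and> real (Lambda_tilde K \<Lambda>) \<le> \<Lambda>"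
proof -
  define c where "c = (exp 1 - 1) / (2 * real K * exp 1)"
  have e1: "1 < exp (1::real)" by simp
  have cpos: "0 < c" unfolding c_def using K e1 by (intro divide_pos_pos) auto
  have cle: "c \<le> 1"
  proof -
    have "exp 1 \<le> 2 * real K * exp 1" using mult_right_mono[of 1 "2 * real K" "exp 1"] K by simp
    then have "exp 1 - 1 \<le> 2 * real K * exp 1" by linarith
    then show ?thesis unfolding c_def using K e1 by (simp add: divide_le_eq)
  qed
  define \<kappa> where "\<kappa> = 8 / c"
  have kpos: "0 < \<kappa>" unfolding \<kappa>_def using cpos by simp
  have ev1: "\<forall>\<^sub>F \<Lambda> in at_top. 3 \<le> (\<Lambda>::real)" by real_asymp
  have ev2: "\<forall>\<^sub>F \<Lambda> in at_top. 1 \<le> ln (\<Lambda>::real)" by real_asymp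
  have ev3: "\<forall>\<^sub>F \<Lambda> in at_top. 2 \<le> c * \<Lambda> / (4 * (ln \<Lambda>)^2)" using cpos by real_asymp
  have "\<forall>\<^sub>F \<Lambda> in at_top. 3 \<le> \<Lambda> \<and> 1 \<le> ln \<Lambda> \<and>
            \<Lambda> / (\<kappa> * (ln \<Lambda>)^2) \<le> real (Lambda_tilde K \<Lambda>) \<and> real (Lambda_tilde K \<Lambda>) \<le> \<Lambda>"
    using ev1 ev2 ev3
  proof eventually_elim
    case (elim \<Lambda>)
    define l where "l = ln \<Lambda>"
    define v where "v = c * \<Lambda> / (l + 1)^2"
    have l1: "1 \<le> l" using elim unfolding l_def by simp
    have Lpos: "0 < \<Lambda>" using elim by simp
    have veq: "(exp 1 - 1) * \<Lambda> / (2 * real K * exp 1 * (ln \<Lambda> + 1)^2) = v"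
      unfolding v_def c_def l_def by (simp add: field_simps)
    have Lt: "Lambda_tilde K \<Lambda> = nat \<lfloor>v\<rfloor>" unfolding Lambda_tilde_def veq ..
    have "(l + 1)^2 \<le> (2 * l)^2" using l1 by (intro power_mono) auto
    then have sq: "(l + 1)^2 \<le> 4 * l^2" by (simp add: power_mult_distrib)
    have sqpos: "0 < (l + 1)^2" using l1 by simp
    have l2: "0 < l^2" using l1 by simp
    have v1: "c * \<Lambda> / (4 * l^2) \<le> v" unfolding v_def using sq sqpos cpos Lpos l2
      by (intro divide_left_mono) (auto intro: mult_pos_pos)
    have v2: "2 \<le> c * \<Lambda> / (4 * l^2)" using elim unfolding l_def by simp
    have vnn: "0 \<le> v" using v1 v2 by linarith
    have "v - 1 \<le> real (nat \<lfloor>v\<rfloor>)" using vnn by linarith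
    moreover have "c * \<Lambda> / (8 * l^2) \<le> v - 1"
    proof -
      have "c * \<Lambda> / (8 * l^2) = (c * \<Lambda> / (4 * l^2)) / 2" by (simp add: field_simps)
      then show ?thesis using v1 v2 by linarith
    qed
    moreover have "\<Lambda> / (\<kappa> * l^2) = c * \<Lambda> / (8 * l^2)" unfolding \<kappa>_def using cpos by (simp add: field_simps)
    ultimately have low: "\<Lambda> / (\<kappa> * l^2) \<le> real (Lambda_tilde K \<Lambda>)" unfolding Lt by linarith
    have "v \<le> c * \<Lambda>"
    proof -
      have "1 \<le> (l + 1)^2" using l1 by (intro one_le_power) simp
      then have "c * \<Lambda> / (l + 1)^2 \<le> c * \<Lambda> / 1" using cpos Lpos by (intro divide_left_mono) auto
      then show ?thesis unfolding v_def by simp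
    qed
    also have "\<dots> \<le> \<Lambda>" using cle Lpos by (simp add: mult_le_cancel_right1)
    finally have "real (nat \<lfloor>v\<rfloor>) \<le> \<Lambda>" using vnn by linarith
    then show ?case using low elim Lt unfolding l_def by simp
  qed
  then show ?thesis using kpos by blast
qed

lemma Lt_top:
  fixes K :: nat assumes K: "1 \<le> K"
  shows "filterlim (\<lambda>\<Lambda>. real (Lambda_tilde K \<Lambda>)) at_top at_top"
proof -
  obtain \<kappa> where kpos: "\<kappa> > 0" and ev: "\<forall>\<^sub>F \<Lambda> in at_top. 3 \<le> \<Lambda> \<and> 1 \<le> ln \<Lambda> \<and>
            \<Lambda> / (\<kappa> * (ln \<Lambda>)^2) \<le> real (Lambda_tilde K \<Lambda>) \<and> real (Lambda_tilde K \<Lambda>) \<le> \<Lambda>"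
    using Lt_bounds[OF K] by blast
  have lim: "filterlim (\<lambda>\<Lambda>::real. \<Lambda> / (\<kappa> * (ln \<Lambda>)^2)) at_top at_top" using kpos by real_asymp
  show ?thesis
    by (rule filterlim_at_top_mono[OF lim]) (use ev in \<open>eventually_elim, simp\<close>)
qed

lemma T1:
  fixes X c m p \<Lambda> ll :: real
  assumes "0 \<le> X" "X \<le> c * ll powr m / \<Lambda>" "0 < c" "0 \<le> m" "0 < p" "0 < \<Lambda>" "1 \<le> ll"
  shows "X powr p \<le> c powr p * ll ^ nat \<lceil>m * p\<rceil> * \<Lambda> powr (- p)"
proof -
  have "X powr p \<le> (c * ll powr m / \<Lambda>) powr p" using assms by (intro powr_mono2) auto
  also have "\<dots> = c powr p * ll powr (m * p) * \<Lambda> powr (- p)"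
    using assms by (simp add: powr_mult powr_divide powr_powr powr_minus divide_simps)
  also have "\<dots> \<le> c powr p * ll ^ nat \<lceil>m * p\<rceil> * \<Lambda> powr (- p)"
  proof -
    have mp: "0 \<le> m * p" using assms by simp
    have "m * p \<le> of_int \<lceil>m * p\<rceil>" by (rule le_of_int_ceiling)
    also have "\<dots> = real (nat \<lceil>m * p\<rceil>)" using mp by simp
    finally have "m * p \<le> real (nat \<lceil>m * p\<rceil>)" .
    then have "ll powr (m * p) \<le> ll powr (real (nat \<lceil>m * p\<rceil>))" using assms
      by (intro powr_mono) auto
    also have "\<dots> = ll ^ nat \<lceil>m * p\<rceil>" by (rule powr_realpow) (use assms in auto)
    finally show ?thesis using assms by (intro mult_right_mono mult_left_mono) auto
  qed
  finally show ?thesis .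
qed


lemma rho_pow: "0 < \<rho> \<Longrightarrow> \<rho> ^ n = exp (- ln (1 / \<rho>) * real n)"
  by (simp add: ln_div exp_of_nat_mult[symmetric] mult.commute exp_ln powr_realpow[symmetric] powr_def)

lemma rho_powr: "0 < \<rho> \<Longrightarrow> \<rho> powr (- d * real n) = exp (d * real n * ln (1 / \<rho>))"
  by (simp add: powr_def ln_div)

lemma G:
  fixes \<rho> d D C M Q x :: real and H j :: nat
  assumes r: "0 < \<rho>" "\<rho> < 1" and d: "0 \<le> d" "d \<le> D" "0 < D" and C: "1 < C"
    and M: "1 \<le> M" and Q: "1 \<le> Q" and QM: "Q * M \<le> x"
    and H: "H = nat \<lfloor>ln (x / (Q * M)) / (D * ln (1 / \<rho>))\<rfloor>"
    and HM: "real H \<le> M"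
    and ej: "4 * C * exp (real j) \<le> Q * exp (ln (1 / \<rho>) * real H * (D - d))"
  shows "4 * C * real H * exp (real j) * \<rho> powr (- d * real H) \<le> x"
    and "exp (real j) \<le> x"
    and "\<rho> ^ H \<le> exp (ln (1 / \<rho>)) * (Q * M / x) powr (1 / D)"
proof -
  define L where "L = ln (1 / \<rho>)"
  have Lpos: "0 < L" unfolding L_def using r by simp
  have QMpos: "0 < Q * M" using Q M by simp
  have xpos: "0 < x" using QM QMpos by linarith
  define Y where "Y = x / (Q * M)"
  have Y1: "1 \<le> Y" unfolding Y_def using QM QMpos by simp
  define u where "u = ln Y / (D * L)"
  have u0: "0 \<le> u" unfolding u_def using Y1 d Lpos by simp
  have Hu: "real H \<le> u" "u < real H + 1" unfolding H u_def Y_def L_def using u0[unfolded u_def Y_def L_def] by linarith+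
  have expY: "exp (L * real H * D) \<le> Y"
  proof -
    have "L * real H * D \<le> L * u * D" using Hu Lpos d by (simp add: mult_right_mono mult_left_mono)
    also have "\<dots> = ln Y" unfolding u_def using Lpos d by simp
    finally show ?thesis using Y1 by (metis exp_le_cancel_iff exp_ln less_le_trans zero_less_one)
  qed
  have pw: "\<rho> powr (- d * real H) = exp (d * real H * L)" unfolding L_def by (rule rho_powr[OF r(1)])
  have A: "4 * C * exp (real j) * \<rho> powr (- d * real H) \<le> Q * Y"
  proof -
    have "4 * C * exp (real j) * \<rho> powr (- d * real H) \<le> Q * exp (L * real H * (D - d)) * exp (d * real H * L)"
      unfolding pw L_def using ej by (intro mult_right_mono) auto
    also have "\<dots> = Q * exp (L * real H * D)" by (simp add: mult.assoc exp_add[symmetric] algebra_simps)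
    also have "\<dots> \<le> Q * Y" using expY Q by simp
    finally show ?thesis .
  qed
  have "4 * C * real H * exp (real j) * \<rho> powr (- d * real H) = real H * (4 * C * exp (real j) * \<rho> powr (- d * real H))"
    by simp
  also have "\<dots> \<le> M * (Q * Y)" by (rule mult_mono[OF HM A]) (use M C in auto)
  also have "\<dots> = x" unfolding Y_def using Q M by (simp add: field_simps)
  finally show "4 * C * real H * exp (real j) * \<rho> powr (- d * real H) \<le> x" .
  have "exp (real j) \<le> 4 * C * exp (real j)" using C by simp
  also have "\<dots> \<le> Q * exp (L * real H * (D - d))" using ej unfolding L_def .
  also have "\<dots> \<le> Q * exp (L * real H * D)" using Q Lpos d by (simp add: mult_left_mono)
  also have "\<dots> \<le> Q * Y" using expY Q by simp
  also have "\<dots> \<le> x"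
  proof -
    have "Q * Y \<le> M * (Q * Y)" using M Q Y1 by simp
    also have "M * (Q * Y) = x" unfolding Y_def using Q M by (simp add: field_simps)
    finally show ?thesis .
  qed
  finally show "exp (real j) \<le> x" .
  have "\<rho> ^ H = exp (- L * real H)" unfolding L_def by (rule rho_pow[OF r(1)])
  also have "\<dots> \<le> exp (- L * (u - 1))" using Hu Lpos by simp
  also have "\<dots> = exp L * exp (- (ln Y / D))" unfolding u_def using Lpos d by (simp add: exp_add[symmetric] field_simps)
  also have "exp (- (ln Y / D)) = (Q * M / x) powr (1 / D)"
  proof -
    have "exp (- (ln Y / D)) = Y powr (- 1 / D)" using Y1 by (simp add: powr_def)
    also have "\<dots> = (1 / Y) powr (1 / D)" using Y1 by (simp add: powr_minus_divide powr_divide)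
    also have "1 / Y = Q * M / x" unfolding Y_def by simp
    finally show ?thesis .
  qed
  finally show "\<rho> ^ H \<le> exp (ln (1 / \<rho>)) * (Q * M / x) powr (1 / D)" unfolding L_def .
qed

lemma finish2:
  fixes r Xa Xb :: "real \<Rightarrow> real" and p aa ab ca cb ma mb :: real
  assumes p: "0 < p" and a: "0 \<le> aa" "0 \<le> ab" and c: "0 < ca" "0 < cb" and m: "0 \<le> ma" "0 \<le> mb"
    and ev: "\<forall>\<^sub>F \<Lambda> in at_top. 1 \<le> ln \<Lambda> \<and> 0 < \<Lambda> \<and> 0 \<le> Xa \<Lambda> \<and> Xa \<Lambda> \<le> ca * ln \<Lambda> powr ma / \<Lambda> \<and>
        0 \<le> Xb \<Lambda> \<and> Xb \<Lambda> \<le> cb * ln \<Lambda> powr mb / \<Lambda> \<and> r \<Lambda> \<le> aa * Xa \<Lambda> powr p + ab * Xb \<Lambda> powr p"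
  shows "Otilde_on S r (\<lambda>\<Lambda>. \<Lambda> powr (- p))"
proof -
  define k where "k = nat \<lceil>ma * p\<rceil> + nat \<lceil>mb * p\<rceil>"
  define c where "c = aa * ca powr p + ab * cb powr p"
  have "\<forall>\<^sub>F \<Lambda> in at_top. \<Lambda> \<in> S \<longrightarrow> r \<Lambda> \<le> c * (ln \<Lambda>) ^ k * \<Lambda> powr (- p)"
    using ev
  proof eventually_elim
    case (elim \<Lambda>)
    define l where "l = ln \<Lambda>"
    have l1: "1 \<le> l" using elim l_def by simp
    have ta: "Xa \<Lambda> powr p \<le> ca powr p * l ^ nat \<lceil>ma * p\<rceil> * \<Lambda> powr (- p)"
      by (rule T1) (use elim c m p in \<open>auto simp: l_def\<close>)
    have tb: "Xb \<Lambda> powr p \<le> cb powr p * l ^ nat \<lceil>mb * p\<rceil> * \<Lambda> powr (- p)"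
      by (rule T1) (use elim c m p in \<open>auto simp: l_def\<close>)
    have ka: "l ^ nat \<lceil>ma * p\<rceil> \<le> l ^ k" unfolding k_def using l1 by (intro power_increasing) auto
    have kb: "l ^ nat \<lceil>mb * p\<rceil> \<le> l ^ k" unfolding k_def using l1 by (intro power_increasing) auto
    have Lp: "0 \<le> \<Lambda> powr (- p)" by simp
    have "r \<Lambda> \<le> aa * Xa \<Lambda> powr p + ab * Xb \<Lambda> powr p" using elim by simp
    also have "\<dots> \<le> aa * (ca powr p * l ^ k * \<Lambda> powr (- p)) + ab * (cb powr p * l ^ k * \<Lambda> powr (- p))"
    proof -
      have "ca powr p * l ^ nat \<lceil>ma * p\<rceil> * \<Lambda> powr (- p) \<le> ca powr p * l ^ k * \<Lambda> powr (- p)"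
        using ka Lp by (intro mult_right_mono mult_left_mono) auto
      moreover have "cb powr p * l ^ nat \<lceil>mb * p\<rceil> * \<Lambda> powr (- p) \<le> cb powr p * l ^ k * \<Lambda> powr (- p)"
        using kb Lp by (intro mult_right_mono mult_left_mono) auto
      ultimately show ?thesis using ta tb a by (intro add_mono mult_left_mono) auto
    qed
    also have "\<dots> = c * l ^ k * \<Lambda> powr (- p)" unfolding c_def by (simp add: algebra_simps)
    finally show ?case unfolding l_def by simp
  qed
  then show ?thesis unfolding Otilde_on_def by blast
qed

lemma ev_Lt:
  fixes K :: nat assumes "1 \<le> K" and "\<forall>\<^sub>F x in at_top. P x"
  shows "\<forall>\<^sub>F \<Lambda> in at_top. P (real (Lambda_tilde K \<Lambda>))"
  using Lt_top[OF assms(1)] assms(2) unfolding filterlim_iff by blast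



lemma lambertW_ge:
  fixes w0 y :: real
  assumes w0: "0 \<le> w0" and y: "w0 * exp w0 \<le> y"
  shows "w0 \<le> lambertW y"
proof -
  have mono: "w1 * exp w1 < w2 * exp w2" if "0 \<le> w1" "w1 < w2" for w1 w2 :: real
  proof -
    have "w1 * exp w1 \<le> w1 * exp w2" using that by (intro mult_left_mono) auto
    also have "\<dots> < w2 * exp w2" using that by simp
    finally show ?thesis .
  qed
  have "0 \<le> w0 * exp w0" using w0 by simp
  then have y0: "0 \<le> y" using y by linarith
  have "\<exists>w\<ge>0. w \<le> y \<and> w * exp w = y"
  proof (rule IVT)
    show "0 * exp 0 \<le> y" using y0 by simp
    show "y \<le> y * exp y" using y0 by (simp add: mult_le_cancel_left1)
    show "0 \<le> y" by (rule y0)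
    show "\<forall>x. 0 \<le> x \<and> x \<le> y \<longrightarrow> isCont (\<lambda>w. w * exp w) x" by (auto intro!: continuous_intros)
  qed
  then obtain w where w: "0 \<le> w" "w * exp w = y" by blast
  have uniq: "w' = w" if "0 \<le> w' \<and> w' * exp w' = y" for w'
  proof (rule ccontr)
    assume ne: "w' \<noteq> w"
    have w'0: "0 \<le> w'" and w'y: "w' * exp w' = y" using that by auto
    show False
    proof (cases "w' < w")
      case True
      have "w' * exp w' < w * exp w" by (rule mono[OF w'0 True])
      then show False using w'y w(2) by linarith
    next
      case False
      then have "w < w'" using ne by linarith
      have "w * exp w < w' * exp w'" by (rule mono[OF w(1) \<open>w < w'\<close>])
      then show False using w'y w(2) by linarith
    qed
  qed
  have "lambertW y = w" unfolding lambertW_def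
  proof (rule the_equality)
    show "0 \<le> w \<and> w * exp w = y" using w by simp
    show "\<And>w'. 0 \<le> w' \<and> w' * exp w' = y \<Longrightarrow> w' = w" by (rule uniq)
  qed
  show ?thesis
  proof (rule ccontr)
    assume "\<not> w0 \<le> lambertW y"
    then have "w < w0" using \<open>lambertW y = w\<close> by simp
    then have "w * exp w < w0 * exp w0" by (rule mono[OF w(1)])
    then show False using y w(2) by linarith
  qed
qed

context
  fixes K :: nat and P :: "nat \<Rightarrow> nat \<Rightarrow> 'x set" and xr :: "nat \<Rightarrow> nat \<Rightarrow> 'x"
    and \<nu> \<rho> d C :: real and f :: "'x \<Rightarrow> real"
    and fz :: "real \<Rightarrow> 'x \<Rightarrow> real" and lam zc :: "real \<Rightarrow> real"
  assumes part: "hier_part K P xr"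
    and par: "params_ok K \<nu> \<rho> d C"
    and fS: "in_S K P \<nu> \<rho> d C f"
    and fid: "fidelities_ok lam zc"
begin

lemma pars: "\<nu> > 0" "0 < \<rho>" "\<rho> < 1" "C > 1" "d \<ge> 0" "1 \<le> K"
  using par by (auto simp: params_ok_def)

lemma power_case:
  fixes \<zeta> :: "real \<Rightarrow> real" and g :: "real \<Rightarrow> real \<Rightarrow> real" and \<Lambda> D M Q :: real and H j :: nat
  assumes zg: "\<forall>z\<in>{0..1}. strict_mono (g z :: real \<Rightarrow> real) \<and> (\<forall>x. \<bar>f x - g z (fz z x)\<bar> \<le> \<zeta> z)"
    and D: "d \<le> D" "0 < D" and M: "1 \<le> M" and Q: "1 \<le> Q"
    and x1: "1 \<le> real (Lambda_tilde K \<Lambda>)"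
    and QM: "Q * M \<le> real (Lambda_tilde K \<Lambda>)"
    and H: "H = nat \<lfloor>ln (real (Lambda_tilde K \<Lambda>) / (Q * M)) / (D * ln (1 / \<rho>))\<rfloor>"
    and HM: "real H \<le> M"
    and ej: "4 * C * exp (real j) \<le> Q * exp (ln (1 / \<rho>) * real H * (D - d))"
    and zj: "\<zeta> (zc (exp (real j))) \<le> \<nu> * \<rho> ^ H"
  shows "kometo_regret K fz zc xr f \<Lambda> \<le>
           3 * \<nu> * exp (ln (1 / \<rho>)) * (Q * M / real (Lambda_tilde K \<Lambda>)) powr (1 / D)
           + 2 * \<zeta> (zc (real (Lambda_tilde K \<Lambda>)))"
proof -
  note p = pars
  have g1: "4 * C * real H * exp (real j) * \<rho> powr (- d * real H) \<le> real (Lambda_tilde K \<Lambda>)"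
    and g2: "exp (real j) \<le> real (Lambda_tilde K \<Lambda>)"
    and g3: "\<rho> ^ H \<le> exp (ln (1 / \<rho>)) * (Q * M / real (Lambda_tilde K \<Lambda>)) powr (1 / D)"
    using G[OF p(2) p(3) p(5) D(1) D(2) p(4) M Q QM H HM ej] by auto
  have Lt1: "1 \<le> Lambda_tilde K \<Lambda>" using x1 by simp
  have "kometo_regret K fz zc xr f \<Lambda> \<le> 3 * \<nu> * \<rho> ^ H + 2 * \<zeta> (zc (real (Lambda_tilde K \<Lambda>)))"
    by (rule regret_le[OF part par fS fid zg Lt1 g2 zj g1])
  also have "3 * \<nu> * \<rho> ^ H \<le> 3 * \<nu> * (exp (ln (1 / \<rho>)) * (Q * M / real (Lambda_tilde K \<Lambda>)) powr (1 / D))"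
    using g3 p by (intro mult_left_mono) auto
  finally show ?thesis by (simp add: mult.assoc)
qed


lemma ev_QM: fixes Q E :: real assumes "0 < Q" "0 < E"
  shows "\<forall>\<^sub>F x in at_top. Q * (ln x / E + 1) \<le> x"
  using assms by real_asymp

lemma ev_b2: fixes a s L l0 E b :: real assumes "0 < a" "0 < s" "0 < L" "0 \<le> l0" "0 < E" "0 < b"
  shows "\<forall>\<^sub>F x in at_top. a * (s * (L * (ln x / E + 1) + l0) + 1) powr (1 / b) * (ln x / E + 1) \<le> x"
  using assms by real_asymp

lemma ev_b1: fixes b s q :: real assumes "b > 0" "s > 0" "q > 0"
  shows "\<forall>\<^sub>F x in at_top. exp (- (x powr b) / s) \<le> x powr (-q)"
  using assms by real_asymp

lemma ev_pow_ge: fixes c0 g :: real assumes "0 < g"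
  shows "\<forall>\<^sub>F x in at_top. c0 \<le> x powr g"
  using assms by real_asymp

lemma nat_floor_le: "0 \<le> t \<Longrightarrow> real (nat \<lfloor>t\<rfloor>) \<le> t"
  by linarith

lemma nat_ceil_bounds: "0 \<le> t \<Longrightarrow> t \<le> real (nat \<lceil>t\<rceil>) \<and> real (nat \<lceil>t\<rceil>) \<le> t + 1"
  by linarith

lemma Xbound:
  fixes x \<Lambda> \<kappa> Q D L :: real
  assumes x1: "1 \<le> x" and xL: "x \<le> \<Lambda>" and low: "\<Lambda> / (\<kappa> * (ln \<Lambda>)^2) \<le> x" and l1: "1 \<le> ln \<Lambda>"
    and k: "0 < \<kappa>" and Q: "0 \<le> Q" and DL: "0 < D * L" and L: "0 < \<Lambda>"
  shows "Q * (ln x / (D * L) + 1) / x \<le> (Q * (1 / (D * L) + 1) * \<kappa>) * ln \<Lambda> powr 3 / \<Lambda>"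
    and "1 / x \<le> \<kappa> * ln \<Lambda> powr 2 / \<Lambda>"
proof -
  define l where "l = ln \<Lambda>"
  have lpos: "0 < l" using l1 l_def by simp
  have inv: "1 / x \<le> \<kappa> * l^2 / \<Lambda>"
  proof -
    have "\<Lambda> \<le> \<kappa> * l^2 * x" using low k lpos unfolding l_def by (simp add: divide_le_eq mult.commute)
    then show ?thesis using x1 L by (simp add: divide_simps mult.commute)
  qed
  then show "1 / x \<le> \<kappa> * ln \<Lambda> powr 2 / \<Lambda>" using lpos unfolding l_def by (simp add: powr_realpow)
  have lnx: "ln x \<le> l" unfolding l_def using x1 xL by simp
  have lnx0: "0 \<le> ln x" using x1 by simp
  have M: "ln x / (D * L) + 1 \<le> (1 / (D * L) + 1) * l"
  proof -
    have "ln x / (D * L) \<le> l / (D * L)" using lnx DL by (simp add: divide_right_mono)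
    also have "\<dots> = (1 / (D * L)) * l" by simp
    finally show ?thesis using l1 l_def by (simp add: distrib_right)
  qed
  have "Q * (ln x / (D * L) + 1) / x = Q * (ln x / (D * L) + 1) * (1 / x)" by simp
  also have "\<dots> \<le> Q * ((1 / (D * L) + 1) * l) * (\<kappa> * l^2 / \<Lambda>)"
  proof -
    have nn: "0 \<le> (1 / (D * L) + 1) * l" using DL lpos by simp
    have m1: "Q * (ln x / (D * L) + 1) \<le> Q * ((1 / (D * L) + 1) * l)" using M Q by (rule mult_left_mono)
    show ?thesis by (rule mult_mono[OF m1 inv]) (use nn Q x1 in auto)
  qed
  also have "\<dots> = (Q * (1 / (D * L) + 1) * \<kappa>) * l ^ 3 / \<Lambda>" by (simp add: power2_eq_square power3_eq_cube)
  finally show "Q * (ln x / (D * L) + 1) / x \<le> (Q * (1 / (D * L) + 1) * \<kappa>) * ln \<Lambda> powr 3 / \<Lambda>"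
    using lpos unfolding l_def by (simp add: powr_realpow)
qed

lemma case_a:
  fixes A \<alpha> :: real and S :: "real set"
  assumes A: "A > 0" "\<alpha> > 0" and F: "in_F (asm_a A \<alpha>) f fz zc"
  shows "Otilde_on S (kometo_regret K fz zc xr f) (\<lambda>\<Lambda>. \<Lambda> powr (- (1 / (d + 1 / \<alpha>))))"
proof -
  note p = pars
  obtain \<zeta> :: "real \<Rightarrow> real" and g :: "real \<Rightarrow> real \<Rightarrow> real"
    where zg: "\<forall>z\<in>{0..1}. strict_mono (g z :: real \<Rightarrow> real) \<and> (\<forall>x. \<bar>f x - g z (fz z x)\<bar> \<le> \<zeta> z)"
      and Phi: "\<forall>c\<ge>1. \<zeta> (zc c) \<le> A / c powr \<alpha>"
    using F unfolding in_F_def asm_a_def by blast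
  define A' where "A' = max A \<nu>"
  define l0 where "l0 = ln (A' / \<nu>)"
  define D where "D = d + 1 / \<alpha>"
  define L where "L = ln (1 / \<rho>)"
  define Q where "Q = 4 * C * exp 1 * (A' / \<nu>) powr (1 / \<alpha>)"
  define pp where "pp = 1 / D"
  have Lpos: "0 < L" unfolding L_def using p by simp
  have Dpos: "0 < D"
  proof -
    have "0 < 1 / \<alpha>" using A by simp
    then show ?thesis unfolding D_def using p by linarith
  qed
  have dD: "d \<le> D" unfolding D_def using A by simp
  have DLpos: "0 < D * L" using Dpos Lpos by simp
  have Aq: "1 \<le> A' / \<nu>" unfolding A'_def using p by simp
  have A'pos: "0 < A'" unfolding A'_def using p by simp
  have l0nn: "0 \<le> l0" unfolding l0_def using Aq by simp
  have Q1: "1 \<le> Q"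
  proof -
    have "1 \<le> (A' / \<nu>) powr (1 / \<alpha>)" using Aq A by (intro ge_one_powr_ge_zero) auto
    moreover have "1 \<le> 4 * C * exp 1" using mult_mono[of 1 "4 * C" 1 "exp 1"] p by simp
    ultimately show ?thesis unfolding Q_def using mult_mono[of 1 "4 * C * exp 1" 1 "(A' / \<nu>) powr (1 / \<alpha>)"] by simp
  qed
  have aD: "pp \<le> \<alpha>"
  proof -
    have "1 \<le> D * \<alpha>" unfolding D_def using A p by (simp add: distrib_right)
    then show ?thesis unfolding pp_def using Dpos by (simp add: divide_le_eq mult.commute)
  qed
  have ppos: "0 < pp" unfolding pp_def using Dpos by simp
  obtain \<kappa> where kpos: "\<kappa> > 0" and evL: "\<forall>\<^sub>F \<Lambda> in at_top. 3 \<le> \<Lambda> \<and> 1 \<le> ln \<Lambda> \<and>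
            \<Lambda> / (\<kappa> * (ln \<Lambda>)^2) \<le> real (Lambda_tilde K \<Lambda>) \<and> real (Lambda_tilde K \<Lambda>) \<le> \<Lambda>"
    using Lt_bounds[OF p(6)] by blast
  have evx1: "\<forall>\<^sub>F x in at_top. 1 \<le> (x::real)" by real_asymp
  have Qpos: "0 < Q" using Q1 by simp
  have evx2: "\<forall>\<^sub>F x in at_top. Q * (ln x / (D * L) + 1) \<le> (x::real)" by (rule ev_QM[OF Qpos DLpos])
  have evX: "\<forall>\<^sub>F \<Lambda> in at_top. 1 \<le> real (Lambda_tilde K \<Lambda>) \<and>
      Q * (ln (real (Lambda_tilde K \<Lambda>)) / (D * L) + 1) \<le> real (Lambda_tilde K \<Lambda>)"
    by (rule ev_Lt[OF p(6)]) (rule eventually_conj[OF evx1 evx2])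
  have tgt: "(\<lambda>\<Lambda>. \<Lambda> powr (- (1 / (d + 1 / \<alpha>)))) = (\<lambda>\<Lambda>. \<Lambda> powr (- pp))" unfolding pp_def D_def ..
  show ?thesis unfolding tgt
  proof (rule finish2[where aa = "3 * \<nu> * exp L" and ab = "2 * A"
        and ca = "Q * (1 / (D * L) + 1) * \<kappa>" and cb = \<kappa> and ma = 3 and mb = 2
        and Xa = "\<lambda>\<Lambda>. Q * (ln (real (Lambda_tilde K \<Lambda>)) / (D * L) + 1) / real (Lambda_tilde K \<Lambda>)"
        and Xb = "\<lambda>\<Lambda>. 1 / real (Lambda_tilde K \<Lambda>)"])
    show "0 < pp" by (rule ppos)
    show "0 \<le> 3 * \<nu> * exp L" using p by simp
    show "0 \<le> 2 * A" using A by simp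
    show "0 < Q * (1 / (D * L) + 1) * \<kappa>" using Qpos DLpos kpos by (simp add: add_pos_pos)
    show "0 < \<kappa>" by (rule kpos)
    show "0 \<le> (3::real)" "0 \<le> (2::real)" by simp_all
    show "\<forall>\<^sub>F \<Lambda> in at_top. 1 \<le> ln \<Lambda> \<and> 0 < \<Lambda> \<and>
        0 \<le> Q * (ln (real (Lambda_tilde K \<Lambda>)) / (D * L) + 1) / real (Lambda_tilde K \<Lambda>) \<and>
        Q * (ln (real (Lambda_tilde K \<Lambda>)) / (D * L) + 1) / real (Lambda_tilde K \<Lambda>) \<le> Q * (1 / (D * L) + 1) * \<kappa> * ln \<Lambda> powr 3 / \<Lambda> \<and>
        0 \<le> 1 / real (Lambda_tilde K \<Lambda>) \<and> 1 / real (Lambda_tilde K \<Lambda>) \<le> \<kappa> * ln \<Lambda> powr 2 / \<Lambda> \<and>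
        kometo_regret K fz zc xr f \<Lambda> \<le> 3 * \<nu> * exp L * (Q * (ln (real (Lambda_tilde K \<Lambda>)) / (D * L) + 1) / real (Lambda_tilde K \<Lambda>)) powr pp
           + 2 * A * (1 / real (Lambda_tilde K \<Lambda>)) powr pp"
      using evL evX
    proof eventually_elim
      case (elim \<Lambda>)
      define x where "x = real (Lambda_tilde K \<Lambda>)"
      define M where "M = ln x / (D * L) + 1"
      have x1: "1 \<le> x" and QM: "Q * M \<le> x" and xL: "x \<le> \<Lambda>" and low: "\<Lambda> / (\<kappa> * (ln \<Lambda>)^2) \<le> x"
        and l1: "1 \<le> ln \<Lambda>" and L3: "3 \<le> \<Lambda>"
        using elim unfolding x_def M_def by auto
      have lnx0: "0 \<le> ln x" using x1 by simp
      have M1: "1 \<le> M" unfolding M_def using lnx0 DLpos by simp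
      define H where "H = nat \<lfloor>ln (x / (Q * M)) / (D * ln (1 / \<rho>))\<rfloor>"
      define t where "t = (l0 + L * real H) / \<alpha>"
      define j where "j = nat \<lceil>t\<rceil>"
      have QMpos: "0 < Q * M" using Q1 M1 by simp
      have Y1: "1 \<le> x / (Q * M)" using QM QMpos by simp
      have HM: "real H \<le> M"
      proof -
        have "real H \<le> ln (x / (Q * M)) / (D * L)" unfolding H_def L_def[symmetric]
          by (rule nat_floor_le) (use Y1 DLpos in simp)
        also have "\<dots> \<le> ln x / (D * L)"
        proof -
          have "x / (Q * M) \<le> x" using x1 QMpos Q1 M1 by (simp add: divide_le_eq) (metis mult_le_cancel_right1 one_le_mult_iff less_le_trans zero_less_one order.trans[OF _ mult_right_mono] le_less)
          then have "ln (x / (Q * M)) \<le> ln x" using Y1 by simp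
          then show ?thesis using DLpos by (simp add: divide_right_mono)
        qed
        also have "\<dots> \<le> M" unfolding M_def by simp
        finally show ?thesis .
      qed
      have t0: "0 \<le> t" unfolding t_def using l0nn Lpos A by simp
      have jt: "t \<le> real j" "real j \<le> t + 1" using nat_ceil_bounds[OF t0] unfolding j_def by auto
      have ej: "4 * C * exp (real j) \<le> Q * exp (ln (1 / \<rho>) * real H * (D - d))"
      proof -
        have "4 * C * exp (real j) \<le> 4 * C * exp (t + 1)" using jt p by simp
        also have "\<dots> = 4 * C * exp 1 * exp (l0 / \<alpha>) * exp (L * real H / \<alpha>)"
          unfolding t_def by (simp add: exp_add[symmetric] add_divide_distrib)
        also have "exp (l0 / \<alpha>) = (A' / \<nu>) powr (1 / \<alpha>)" unfolding l0_def using Aq A'pos p by (simp add: powr_def)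
        also have "L * real H / \<alpha> = ln (1 / \<rho>) * real H * (D - d)" unfolding D_def L_def by simp
        finally show ?thesis unfolding Q_def by simp
      qed
      have zj: "\<zeta> (zc (exp (real j))) \<le> \<nu> * \<rho> ^ H"
      proof -
        have "\<zeta> (zc (exp (real j))) \<le> A / exp (real j) powr \<alpha>" using Phi by simp
        also have "\<dots> = A / exp (real j * \<alpha>)" by (simp add: powr_def)
        also have "\<dots> \<le> A' / exp (l0 + L * real H)"
        proof -
          have "l0 + L * real H \<le> real j * \<alpha>" using jt(1) A unfolding t_def by (simp add: divide_le_eq)
          then have "exp (l0 + L * real H) \<le> exp (real j * \<alpha>)" by simp
          then show ?thesis unfolding A'_def using A by (intro frac_le) auto
        qed
        also have "\<dots> = \<nu> * exp (- L * real H)" unfolding l0_def using A'pos p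
          by (simp add: exp_add exp_minus field_simps)
        also have "\<dots> = \<nu> * \<rho> ^ H" unfolding L_def using rho_pow[OF p(2), of H] by simp
        finally show ?thesis .
      qed
      have reg: "kometo_regret K fz zc xr f \<Lambda> \<le> 3 * \<nu> * exp (ln (1 / \<rho>)) * (Q * M / x) powr (1 / D) + 2 * \<zeta> (zc x)"
        unfolding x_def
        by (rule power_case[OF zg dD Dpos M1 Q1 x1[unfolded x_def] QM[unfolded x_def] H_def[unfolded x_def] HM ej zj])
      have z2: "\<zeta> (zc x) \<le> A * (1 / x) powr pp"
      proof -
        have "\<zeta> (zc x) \<le> A / x powr \<alpha>" using Phi x1 by simp
        also have "\<dots> \<le> A / x powr pp" using x1 aD A ppos by (intro divide_left_mono powr_mono) auto
        also have "\<dots> = A * (1 / x) powr pp" using x1 by (simp add: powr_divide)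
        finally show ?thesis .
      qed
      have Lpos': "0 < \<Lambda>" using L3 by simp
      have xb: "Q * (ln x / (D * L) + 1) / x \<le> (Q * (1 / (D * L) + 1) * \<kappa>) * ln \<Lambda> powr 3 / \<Lambda>"
         "1 / x \<le> \<kappa> * ln \<Lambda> powr 2 / \<Lambda>"
        using Xbound[OF x1 xL low l1 kpos _ DLpos Lpos'] Qpos by auto
      have "kometo_regret K fz zc xr f \<Lambda> \<le> 3 * \<nu> * exp L * (Q * (ln x / (D * L) + 1) / x) powr pp + 2 * A * (1 / x) powr pp"
        using reg z2 unfolding L_def[symmetric] pp_def M_def by (simp add: mult.assoc)
      then show ?case using xb l1 Lpos' Qpos DLpos x1 lnx0 unfolding x_def by auto
    qed
  qed
qed

lemma case_c_pos:
  fixes a :: real and S :: "real set"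
  assumes a: "a \<ge> 1" and F: "in_F (asm_c a) f fz zc" and dpos: "d > 0"
  shows "Otilde_on S (kometo_regret K fz zc xr f) (\<lambda>\<Lambda>. \<Lambda> powr (- 1 / d))"
proof -
  note p = pars
  obtain \<zeta> :: "real \<Rightarrow> real" and g :: "real \<Rightarrow> real \<Rightarrow> real"
    where zg: "\<forall>z\<in>{0..1}. strict_mono (g z :: real \<Rightarrow> real) \<and> (\<forall>x. \<bar>f x - g z (fz z x)\<bar> \<le> \<zeta> z)"
      and Phi: "\<forall>c\<ge>a. \<zeta> (zc c) = 0"
    using F unfolding in_F_def asm_c_def by blast
  define j0 where "j0 = nat \<lceil>ln a\<rceil>"
  define D where "D = d"
  define L where "L = ln (1 / \<rho>)"
  define Q where "Q = 4 * C * exp (real j0)"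
  define pp where "pp = 1 / D"
  have Lpos: "0 < L" unfolding L_def using p by simp
  have Dpos: "0 < D" unfolding D_def using dpos by simp
  have dD: "d \<le> D" unfolding D_def by simp
  have DLpos: "0 < D * L" using Dpos Lpos by simp
  have ej0: "a \<le> exp (real j0)"
  proof -
    have "ln a \<le> real j0" unfolding j0_def using a by linarith
    then have "exp (ln a) \<le> exp (real j0)" by simp
    then show ?thesis using a by simp
  qed
  have Q1: "1 \<le> Q"
  proof -
    have "1 \<le> exp (real j0)" by simp
    moreover have "1 \<le> 4 * C" using p by simp
    ultimately show ?thesis unfolding Q_def using mult_mono[of 1 "4 * C" 1 "exp (real j0)"] by simp
  qed
  have ppos: "0 < pp" unfolding pp_def using Dpos by simp
  obtain \<kappa> where kpos: "\<kappa> > 0" and evL: "\<forall>\<^sub>F \<Lambda> in at_top. 3 \<le> \<Lambda> \<and> 1 \<le> ln \<Lambda> \<and>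
            \<Lambda> / (\<kappa> * (ln \<Lambda>)^2) \<le> real (Lambda_tilde K \<Lambda>) \<and> real (Lambda_tilde K \<Lambda>) \<le> \<Lambda>"
    using Lt_bounds[OF p(6)] by blast
  have evx1: "\<forall>\<^sub>F x in at_top. max 1 a \<le> (x::real)" by (rule eventually_ge_at_top)
  have Qpos: "0 < Q" using Q1 by simp
  have evx2: "\<forall>\<^sub>F x in at_top. Q * (ln x / (D * L) + 1) \<le> (x::real)" by (rule ev_QM[OF Qpos DLpos])
  have evX: "\<forall>\<^sub>F \<Lambda> in at_top. max 1 a \<le> real (Lambda_tilde K \<Lambda>) \<and>
      Q * (ln (real (Lambda_tilde K \<Lambda>)) / (D * L) + 1) \<le> real (Lambda_tilde K \<Lambda>)"
    by (rule ev_Lt[OF p(6)]) (rule eventually_conj[OF evx1 evx2])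
  have tgt: "(\<lambda>\<Lambda>. \<Lambda> powr (- 1 / d)) = (\<lambda>\<Lambda>. \<Lambda> powr (- pp))" unfolding pp_def D_def by simp
  show ?thesis unfolding tgt
  proof (rule finish2[where aa = "3 * \<nu> * exp L" and ab = 0
        and ca = "Q * (1 / (D * L) + 1) * \<kappa>" and cb = \<kappa> and ma = 3 and mb = 2
        and Xa = "\<lambda>\<Lambda>. Q * (ln (real (Lambda_tilde K \<Lambda>)) / (D * L) + 1) / real (Lambda_tilde K \<Lambda>)"
        and Xb = "\<lambda>\<Lambda>. 1 / real (Lambda_tilde K \<Lambda>)"])
    show "0 < pp" by (rule ppos)
    show "0 \<le> 3 * \<nu> * exp L" using p by simp
    show "0 \<le> (0::real)" by simp
    show "0 < Q * (1 / (D * L) + 1) * \<kappa>" using Qpos DLpos kpos by (simp add: add_pos_pos)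
    show "0 < \<kappa>" by (rule kpos)
    show "0 \<le> (3::real)" "0 \<le> (2::real)" by simp_all
    show "\<forall>\<^sub>F \<Lambda> in at_top. 1 \<le> ln \<Lambda> \<and> 0 < \<Lambda> \<and>
        0 \<le> Q * (ln (real (Lambda_tilde K \<Lambda>)) / (D * L) + 1) / real (Lambda_tilde K \<Lambda>) \<and>
        Q * (ln (real (Lambda_tilde K \<Lambda>)) / (D * L) + 1) / real (Lambda_tilde K \<Lambda>) \<le> Q * (1 / (D * L) + 1) * \<kappa> * ln \<Lambda> powr 3 / \<Lambda> \<and>
        0 \<le> 1 / real (Lambda_tilde K \<Lambda>) \<and> 1 / real (Lambda_tilde K \<Lambda>) \<le> \<kappa> * ln \<Lambda> powr 2 / \<Lambda> \<and>
        kometo_regret K fz zc xr f \<Lambda> \<le> 3 * \<nu> * exp L * (Q * (ln (real (Lambda_tilde K \<Lambda>)) / (D * L) + 1) / real (Lambda_tilde K \<Lambda>)) powr pp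
           + 0 * (1 / real (Lambda_tilde K \<Lambda>)) powr pp"
      using evL evX
    proof eventually_elim
      case (elim \<Lambda>)
      define x where "x = real (Lambda_tilde K \<Lambda>)"
      define M where "M = ln x / (D * L) + 1"
      have x1: "1 \<le> x" and xa: "a \<le> x" and QM: "Q * M \<le> x" and xL: "x \<le> \<Lambda>" and low: "\<Lambda> / (\<kappa> * (ln \<Lambda>)^2) \<le> x"
        and l1: "1 \<le> ln \<Lambda>" and L3: "3 \<le> \<Lambda>"
        using elim unfolding x_def M_def by auto
      have lnx0: "0 \<le> ln x" using x1 by simp
      have M1: "1 \<le> M" unfolding M_def using lnx0 DLpos by simp
      define H where "H = nat \<lfloor>ln (x / (Q * M)) / (D * ln (1 / \<rho>))\<rfloor>"
      have QMpos: "0 < Q * M" using Q1 M1 by simp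
      have Y1: "1 \<le> x / (Q * M)" using QM QMpos by simp
      have HM: "real H \<le> M"
      proof -
        have "real H \<le> ln (x / (Q * M)) / (D * L)" unfolding H_def L_def[symmetric]
          by (rule nat_floor_le) (use Y1 DLpos in simp)
        also have "\<dots> \<le> ln x / (D * L)"
        proof -
          have "1 \<le> Q * M" using Q1 M1 mult_mono[of 1 Q 1 M] by simp
          then have "x / (Q * M) \<le> x" using x1 by (simp add: divide_le_eq mult_le_cancel_left1)
          then have "ln (x / (Q * M)) \<le> ln x" using Y1 by simp
          then show ?thesis using DLpos by (simp add: divide_right_mono)
        qed
        also have "\<dots> \<le> M" unfolding M_def by simp
        finally show ?thesis .
      qed
      have ej: "4 * C * exp (real j0) \<le> Q * exp (ln (1 / \<rho>) * real H * (D - d))"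
        unfolding Q_def D_def by simp
      have zj: "\<zeta> (zc (exp (real j0))) \<le> \<nu> * \<rho> ^ H" using Phi ej0 p by simp
      have reg: "kometo_regret K fz zc xr f \<Lambda> \<le> 3 * \<nu> * exp (ln (1 / \<rho>)) * (Q * M / x) powr (1 / D) + 2 * \<zeta> (zc x)"
        unfolding x_def
        by (rule power_case[OF zg dD Dpos M1 Q1 x1[unfolded x_def] QM[unfolded x_def] H_def[unfolded x_def] HM ej zj])
      have z2: "\<zeta> (zc x) = 0" using Phi xa by simp
      have Lpos': "0 < \<Lambda>" using L3 by simp
      have xb: "Q * (ln x / (D * L) + 1) / x \<le> (Q * (1 / (D * L) + 1) * \<kappa>) * ln \<Lambda> powr 3 / \<Lambda>"
         "1 / x \<le> \<kappa> * ln \<Lambda> powr 2 / \<Lambda>"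
        using Xbound[OF x1 xL low l1 kpos _ DLpos Lpos'] Qpos by auto
      have "kometo_regret K fz zc xr f \<Lambda> \<le> 3 * \<nu> * exp L * (Q * (ln x / (D * L) + 1) / x) powr pp + 0 * (1 / x) powr pp"
        using reg z2 unfolding L_def[symmetric] pp_def M_def by (simp add: mult.assoc)
      then show ?case using xb l1 Lpos' Qpos DLpos x1 lnx0 unfolding x_def by auto
    qed
  qed
qed

lemma case_b_pos:
  fixes B \<beta> \<sigma> :: real and S :: "real set"
  assumes B: "B > 0" "\<beta> > 0" "\<sigma> > 0" and F: "in_F (asm_b B \<beta> \<sigma>) f fz zc" and dpos: "d > 0"
  shows "Otilde_on S (kometo_regret K fz zc xr f) (\<lambda>\<Lambda>. \<Lambda> powr (- 1 / d))"
proof -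
  note p = pars
  obtain \<zeta> :: "real \<Rightarrow> real" and g :: "real \<Rightarrow> real \<Rightarrow> real"
    where zg: "\<forall>z\<in>{0..1}. strict_mono (g z :: real \<Rightarrow> real) \<and> (\<forall>x. \<bar>f x - g z (fz z x)\<bar> \<le> \<zeta> z)"
      and Phi: "\<forall>c\<ge>1. \<zeta> (zc c) \<le> B * exp (- (c powr \<beta>) / \<sigma>)"
    using F unfolding in_F_def asm_b_def by blast
  define B' where "B' = max B \<nu>"
  define l0 where "l0 = ln (B' / \<nu>)"
  define D where "D = d"
  define L where "L = ln (1 / \<rho>)"
  define sf where "sf = (\<lambda>h::real. \<sigma> * (L * h + l0) + 1)"
  define Qf where "Qf = (\<lambda>M. 4 * C * exp 1 * sf M powr (1 / \<beta>))"
  define pp where "pp = 1 / D"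
  define m0 where "m0 = 1 / (D * L) + 1"
  define c' where "c' = \<sigma> * (L * m0 + l0) + 1"
  have Lpos: "0 < L" unfolding L_def using p by simp
  have Dpos: "0 < D" unfolding D_def using dpos by simp
  have dD: "d \<le> D" unfolding D_def by simp
  have DLpos: "0 < D * L" using Dpos Lpos by simp
  have Bq: "1 \<le> B' / \<nu>" unfolding B'_def using p by simp
  have B'pos: "0 < B'" unfolding B'_def using p by simp
  have l0nn: "0 \<le> l0" unfolding l0_def using Bq by simp
  have sf1: "1 \<le> sf h" if "0 \<le> h" for h unfolding sf_def using that B Lpos l0nn by simp
  have sfmono: "sf h \<le> sf h'" if "h \<le> h'" for h h' unfolding sf_def using that B Lpos
    by (simp add: mult_left_mono)
  have Q1: "1 \<le> Qf M" if "0 \<le> M" for M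
  proof -
    have "1 \<le> sf M powr (1 / \<beta>)" using sf1[OF that] B by (intro ge_one_powr_ge_zero) auto
    moreover have "1 \<le> 4 * C * exp 1" using mult_mono[of 1 "4 * C" 1 "exp 1"] p by simp
    ultimately show ?thesis unfolding Qf_def using mult_mono[of 1 "4 * C * exp 1" 1 "sf M powr (1 / \<beta>)"] by simp
  qed
  have ppos: "0 < pp" unfolding pp_def using Dpos by simp
  have m0pos: "0 < m0" unfolding m0_def using DLpos by (simp add: add_pos_pos)
  have c'pos: "0 < c'" unfolding c'_def using B Lpos m0pos l0nn by (simp add: add_pos_nonneg)
  obtain \<kappa> where kpos: "\<kappa> > 0" and evL: "\<forall>\<^sub>F \<Lambda> in at_top. 3 \<le> \<Lambda> \<and> 1 \<le> ln \<Lambda> \<and>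
            \<Lambda> / (\<kappa> * (ln \<Lambda>)^2) \<le> real (Lambda_tilde K \<Lambda>) \<and> real (Lambda_tilde K \<Lambda>) \<le> \<Lambda>"
    using Lt_bounds[OF p(6)] by blast
  have evx1: "\<forall>\<^sub>F x in at_top. 1 \<le> (x::real)" by (rule eventually_ge_at_top)
  have ceC: "0 < 4 * C * exp 1" using p by simp
  have evx2: "\<forall>\<^sub>F x in at_top. Qf (ln x / (D * L) + 1) * (ln x / (D * L) + 1) \<le> (x::real)"
    unfolding Qf_def sf_def by (rule ev_b2[OF ceC B(3) Lpos l0nn DLpos B(2)])
  have evx3: "\<forall>\<^sub>F x in at_top. exp (- (x powr \<beta>) / \<sigma>) \<le> x powr (- pp)"
    by (rule ev_b1[OF B(2) B(3) ppos])
  have evX: "\<forall>\<^sub>F \<Lambda> in at_top. 1 \<le> real (Lambda_tilde K \<Lambda>) \<and>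
      Qf (ln (real (Lambda_tilde K \<Lambda>)) / (D * L) + 1) * (ln (real (Lambda_tilde K \<Lambda>)) / (D * L) + 1) \<le> real (Lambda_tilde K \<Lambda>) \<and>
      exp (- (real (Lambda_tilde K \<Lambda>) powr \<beta>) / \<sigma>) \<le> real (Lambda_tilde K \<Lambda>) powr (- pp)"
    by (rule ev_Lt[OF p(6)]) (intro eventually_conj evx1 evx2 evx3)
  have tgt: "(\<lambda>\<Lambda>. \<Lambda> powr (- 1 / d)) = (\<lambda>\<Lambda>. \<Lambda> powr (- pp))" unfolding pp_def D_def by simp
  define ca where "ca = 4 * C * exp 1 * c' powr (1 / \<beta>) * m0 * \<kappa>"
  have capos: "0 < ca" unfolding ca_def using p c'pos m0pos kpos by simp
  show ?thesis unfolding tgt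
  proof (rule finish2[where aa = "3 * \<nu> * exp L" and ab = "2 * B"
        and ca = ca and cb = \<kappa> and ma = "1 / \<beta> + 3" and mb = 2
        and Xa = "\<lambda>\<Lambda>. Qf (ln (real (Lambda_tilde K \<Lambda>)) / (D * L) + 1) * (ln (real (Lambda_tilde K \<Lambda>)) / (D * L) + 1) / real (Lambda_tilde K \<Lambda>)"
        and Xb = "\<lambda>\<Lambda>. 1 / real (Lambda_tilde K \<Lambda>)"])
    show "0 < pp" by (rule ppos)
    show "0 \<le> 3 * \<nu> * exp L" using p by simp
    show "0 \<le> 2 * B" using B by simp
    show "0 < ca" by (rule capos)
    show "0 < \<kappa>" by (rule kpos)
    show "0 \<le> 1 / \<beta> + 3" using B by simp
    show "0 \<le> (2::real)" by simp
    show "\<forall>\<^sub>F \<Lambda> in at_top. 1 \<le> ln \<Lambda> \<and> 0 < \<Lambda> \<and>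
        0 \<le> Qf (ln (real (Lambda_tilde K \<Lambda>)) / (D * L) + 1) * (ln (real (Lambda_tilde K \<Lambda>)) / (D * L) + 1) / real (Lambda_tilde K \<Lambda>) \<and>
        Qf (ln (real (Lambda_tilde K \<Lambda>)) / (D * L) + 1) * (ln (real (Lambda_tilde K \<Lambda>)) / (D * L) + 1) / real (Lambda_tilde K \<Lambda>) \<le> ca * ln \<Lambda> powr (1 / \<beta> + 3) / \<Lambda> \<and>
        0 \<le> 1 / real (Lambda_tilde K \<Lambda>) \<and> 1 / real (Lambda_tilde K \<Lambda>) \<le> \<kappa> * ln \<Lambda> powr 2 / \<Lambda> \<and>
        kometo_regret K fz zc xr f \<Lambda> \<le> 3 * \<nu> * exp L * (Qf (ln (real (Lambda_tilde K \<Lambda>)) / (D * L) + 1) * (ln (real (Lambda_tilde K \<Lambda>)) / (D * L) + 1) / real (Lambda_tilde K \<Lambda>)) powr pp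
           + 2 * B * (1 / real (Lambda_tilde K \<Lambda>)) powr pp"
      using evL evX
    proof eventually_elim
      case (elim \<Lambda>)
      define x where "x = real (Lambda_tilde K \<Lambda>)"
      define M where "M = ln x / (D * L) + 1"
      define Q where "Q = Qf M"
      have x1: "1 \<le> x" and QM: "Q * M \<le> x" and xL: "x \<le> \<Lambda>" and low: "\<Lambda> / (\<kappa> * (ln \<Lambda>)^2) \<le> x"
        and l1: "1 \<le> ln \<Lambda>" and L3: "3 \<le> \<Lambda>" and ex: "exp (- (x powr \<beta>) / \<sigma>) \<le> x powr (- pp)"
        using elim unfolding x_def M_def Q_def by auto
      have lnx0: "0 \<le> ln x" using x1 by simp
      have M1: "1 \<le> M" unfolding M_def using lnx0 DLpos by simp
      have Q1': "1 \<le> Q" unfolding Q_def using Q1 M1 by simp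
      define H where "H = nat \<lfloor>ln (x / (Q * M)) / (D * ln (1 / \<rho>))\<rfloor>"
      define t where "t = ln (sf (real H)) / \<beta>"
      define j where "j = nat \<lceil>t\<rceil>"
      have QMpos: "0 < Q * M" using Q1' M1 by simp
      have Y1: "1 \<le> x / (Q * M)" using QM QMpos by simp
      have HM: "real H \<le> M"
      proof -
        have "real H \<le> ln (x / (Q * M)) / (D * L)" unfolding H_def L_def[symmetric]
          by (rule nat_floor_le) (use Y1 DLpos in simp)
        also have "\<dots> \<le> ln x / (D * L)"
        proof -
          have "1 \<le> Q * M" using Q1' M1 mult_mono[of 1 Q 1 M] by simp
          then have "x / (Q * M) \<le> x" using x1 by (simp add: divide_le_eq mult_le_cancel_left1)
          then have "ln (x / (Q * M)) \<le> ln x" using Y1 by simp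
          then show ?thesis using DLpos by (simp add: divide_right_mono)
        qed
        also have "\<dots> \<le> M" unfolding M_def by simp
        finally show ?thesis .
      qed
      have sH1: "1 \<le> sf (real H)" by (rule sf1) simp
      have t0: "0 \<le> t" unfolding t_def using sH1 B by simp
      have jt: "t \<le> real j" "real j \<le> t + 1" using nat_ceil_bounds[OF t0] unfolding j_def by auto
      have ej: "4 * C * exp (real j) \<le> Q * exp (ln (1 / \<rho>) * real H * (D - d))"
      proof -
        have "4 * C * exp (real j) \<le> 4 * C * exp (t + 1)" using jt p by simp
        also have "\<dots> = 4 * C * exp 1 * exp t" by (simp add: exp_add)
        also have "exp t = sf (real H) powr (1 / \<beta>)" unfolding t_def using sH1 by (simp add: powr_def)
        also have "sf (real H) powr (1 / \<beta>) \<le> sf M powr (1 / \<beta>)"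
          using sfmono[OF HM] sH1 B by (intro powr_mono2) auto
        finally show ?thesis unfolding Q_def Qf_def D_def using p by simp
      qed
      have zj: "\<zeta> (zc (exp (real j))) \<le> \<nu> * \<rho> ^ H"
      proof -
        have "\<zeta> (zc (exp (real j))) \<le> B * exp (- (exp (real j) powr \<beta>) / \<sigma>)" using Phi by simp
        also have "\<dots> \<le> B' * exp (- (L * real H + l0))"
        proof -
          have "ln (sf (real H)) \<le> real j * \<beta>" using jt(1) B unfolding t_def by (simp add: divide_le_eq)
          then have "sf (real H) \<le> exp (real j * \<beta>)" using sH1
            by (metis exp_le_cancel_iff exp_ln less_le_trans zero_less_one)
          then have "\<sigma> * (L * real H + l0) \<le> exp (real j) powr \<beta>" unfolding sf_def by (simp add: powr_def mult.commute)
          then have "L * real H + l0 \<le> exp (real j) powr \<beta> / \<sigma>" using B by (simp add: le_divide_eq mult.commute)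
          then have "exp (- (exp (real j) powr \<beta>) / \<sigma>) \<le> exp (- (L * real H + l0))" by simp
          then show ?thesis unfolding B'_def using B by (intro mult_mono) auto
        qed
        also have "\<dots> = \<nu> * exp (- L * real H)" unfolding l0_def using B'pos p
          by (simp add: exp_add exp_minus field_simps exp_diff)
        also have "\<dots> = \<nu> * \<rho> ^ H" unfolding L_def using rho_pow[OF p(2), of H] by simp
        finally show ?thesis .
      qed
      have reg: "kometo_regret K fz zc xr f \<Lambda> \<le> 3 * \<nu> * exp (ln (1 / \<rho>)) * (Q * M / x) powr (1 / D) + 2 * \<zeta> (zc x)"
        unfolding x_def
        by (rule power_case[OF zg dD Dpos M1 Q1' x1[unfolded x_def] QM[unfolded x_def] H_def[unfolded x_def] HM ej zj])
      have z2: "\<zeta> (zc x) \<le> B * (1 / x) powr pp"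
      proof -
        have "\<zeta> (zc x) \<le> B * exp (- (x powr \<beta>) / \<sigma>)" using Phi x1 by simp
        also have "\<dots> \<le> B * x powr (- pp)" using ex B by simp
        also have "\<dots> = B * (1 / x) powr pp" using x1 by (simp add: powr_minus_divide powr_divide)
        finally show ?thesis .
      qed
      have Lpos': "0 < \<Lambda>" using L3 by simp
      define l where "l = ln \<Lambda>"
      have lpos: "0 < l" using l1 l_def by simp
      have inv: "1 / x \<le> \<kappa> * l^2 / \<Lambda>"
      proof -
        have "\<Lambda> \<le> \<kappa> * l^2 * x" using low kpos lpos unfolding l_def by (simp add: divide_le_eq mult.commute)
        then show ?thesis using x1 Lpos' by (simp add: divide_simps mult.commute)
      qed
      have lnx: "ln x \<le> l" unfolding l_def using x1 xL by simp
      have Mle: "M \<le> m0 * l"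
      proof -
        have "ln x / (D * L) \<le> l / (D * L)" using lnx DLpos by (simp add: divide_right_mono)
        then show ?thesis unfolding M_def m0_def using l1 l_def by (simp add: distrib_right)
      qed
      have sle: "sf M \<le> c' * l"
      proof -
        have "\<sigma> * (L * M + l0) + 1 \<le> \<sigma> * (L * (m0 * l) + l0 * l) + l"
        proof -
          have "L * M \<le> L * (m0 * l)" using Mle Lpos by simp
          moreover have "l0 \<le> l0 * l" using l0nn l1 l_def by (simp add: mult_le_cancel_left1)
          ultimately have "L * M + l0 \<le> L * (m0 * l) + l0 * l" by linarith
          then show ?thesis using B l1 l_def by (smt (verit) mult_left_mono)
        qed
        then show ?thesis unfolding sf_def c'_def by (simp add: algebra_simps)
      qed
      have Qle: "Q \<le> 4 * C * exp 1 * c' powr (1 / \<beta>) * l powr (1 / \<beta>)"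
      proof -
        have "sf M powr (1 / \<beta>) \<le> (c' * l) powr (1 / \<beta>)" using sle sf1[of M] M1 B by (intro powr_mono2) auto
        also have "\<dots> = c' powr (1 / \<beta>) * l powr (1 / \<beta>)" using c'pos lpos by (simp add: powr_mult)
        finally show ?thesis unfolding Q_def Qf_def using p by simp
      qed
      have "Q * M / x = Q * M * (1 / x)" by simp
      also have "\<dots> \<le> (4 * C * exp 1 * c' powr (1 / \<beta>) * l powr (1 / \<beta>)) * (m0 * l) * (\<kappa> * l^2 / \<Lambda>)"
      proof -
        have a1: "Q * M \<le> (4 * C * exp 1 * c' powr (1 / \<beta>) * l powr (1 / \<beta>)) * (m0 * l)"
          by (rule mult_mono[OF Qle Mle]) (use Q1' M1 p in auto)
        show ?thesis by (rule mult_mono[OF a1 inv]) (use p m0pos lpos x1 in auto)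
      qed
      also have "\<dots> = ca * l powr (1 / \<beta> + 3) / \<Lambda>"
        unfolding ca_def using lpos by (simp add: powr_add powr_realpow power2_eq_square power3_eq_cube field_simps)
      finally have xa: "Q * M / x \<le> ca * l powr (1 / \<beta> + 3) / \<Lambda>" .
      have "kometo_regret K fz zc xr f \<Lambda> \<le> 3 * \<nu> * exp L * (Q * M / x) powr pp + 2 * B * (1 / x) powr pp"
        using reg z2 unfolding L_def[symmetric] pp_def by (simp add: mult.assoc)
      moreover have "1 / x \<le> \<kappa> * ln \<Lambda> powr 2 / \<Lambda>" using inv lpos unfolding l_def by (simp add: powr_realpow)
      ultimately show ?case using xa l1 Lpos' QMpos x1 unfolding x_def Q_def M_def l_def by auto
    qed
  qed
qed

lemma case_c_zero:
  fixes a :: real and S :: "real set"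
  assumes a: "a \<ge> 1" and F: "in_F (asm_c a) f fz zc" and d0: "d = 0"
  shows "expOtilde_on S (kometo_regret K fz zc xr f) (\<lambda>\<Lambda>. \<Lambda>)"
proof -
  note p = pars
  obtain \<zeta> :: "real \<Rightarrow> real" and g :: "real \<Rightarrow> real \<Rightarrow> real"
    where zg: "\<forall>z\<in>{0..1}. strict_mono (g z :: real \<Rightarrow> real) \<and> (\<forall>x. \<bar>f x - g z (fz z x)\<bar> \<le> \<zeta> z)"
      and Phi: "\<forall>c\<ge>a. \<zeta> (zc c) = 0"
    using F unfolding in_F_def asm_c_def by blast
  define j0 where "j0 = nat \<lceil>ln a\<rceil>"
  define L where "L = ln (1 / \<rho>)"
  define E where "E = 4 * C * exp (real j0)"
  have Lpos: "0 < L" unfolding L_def using p by simp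
  have Epos: "0 < E" unfolding E_def using p by simp
  have ej0: "a \<le> exp (real j0)"
  proof -
    have "ln a \<le> real j0" unfolding j0_def using a by linarith
    then have "exp (ln a) \<le> exp (real j0)" by simp
    then show ?thesis using a by simp
  qed
  obtain \<kappa> where kpos: "\<kappa> > 0" and evL: "\<forall>\<^sub>F \<Lambda> in at_top. 3 \<le> \<Lambda> \<and> 1 \<le> ln \<Lambda> \<and>
            \<Lambda> / (\<kappa> * (ln \<Lambda>)^2) \<le> real (Lambda_tilde K \<Lambda>) \<and> real (Lambda_tilde K \<Lambda>) \<le> \<Lambda>"
    using Lt_bounds[OF p(6)] by blast
  have evX: "\<forall>\<^sub>F \<Lambda> in at_top. max 1 (exp (real j0)) \<le> real (Lambda_tilde K \<Lambda>)"
    by (rule ev_Lt[OF p(6)]) (rule eventually_ge_at_top)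
  define cc where "cc = L / (E * \<kappa>)"
  have ccpos: "0 < cc" unfolding cc_def using Lpos Epos kpos by simp
  have "\<forall>\<^sub>F \<Lambda> in at_top. \<Lambda> \<in> S \<longrightarrow>
      kometo_regret K fz zc xr f \<Lambda> \<le> 3 * \<nu> * exp L * exp (- cc * \<Lambda> / (ln \<Lambda>) ^ 2)"
    using evL evX
  proof eventually_elim
    case (elim \<Lambda>)
    define x where "x = real (Lambda_tilde K \<Lambda>)"
    have xe: "exp (real j0) \<le> x" and low: "\<Lambda> / (\<kappa> * (ln \<Lambda>)^2) \<le> x"
      and l1: "1 \<le> ln \<Lambda>" and L3: "3 \<le> \<Lambda>"
      using elim unfolding x_def by auto
    have "1 \<le> exp (real j0)" by simp
    then have x1: "1 \<le> x" using xe by linarith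
    define H where "H = nat \<lfloor>x / E\<rfloor>"
    have xE0: "0 \<le> x / E" using x1 Epos by simp
    have HxE: "real H \<le> x / E" "x / E < real H + 1" unfolding H_def using xE0 by linarith+
    have Lt1: "1 \<le> Lambda_tilde K \<Lambda>" using x1 unfolding x_def by simp
    have cond: "4 * C * real H * exp (real j0) * \<rho> powr (- d * real H) \<le> x"
    proof -
      have "4 * C * real H * exp (real j0) * \<rho> powr (- d * real H) = E * real H"
        unfolding E_def d0 using p by simp
      also have "\<dots> \<le> E * (x / E)" using HxE(1) Epos by (intro mult_left_mono) auto
      also have "\<dots> = x" using Epos by simp
      finally show ?thesis .
    qed
    have zj: "\<zeta> (zc (exp (real j0))) \<le> \<nu> * \<rho> ^ H" using Phi ej0 p by simp
    have "kometo_regret K fz zc xr f \<Lambda> \<le> 3 * \<nu> * \<rho> ^ H + 2 * \<zeta> (zc (real (Lambda_tilde K \<Lambda>)))"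
      by (rule regret_le[OF part par fS fid zg Lt1 xe[unfolded x_def] zj cond[unfolded x_def]])
    also have "\<zeta> (zc (real (Lambda_tilde K \<Lambda>))) = 0" using Phi ej0 xe unfolding x_def by simp
    also have "\<rho> ^ H = exp (- L * real H)" unfolding L_def by (rule rho_pow[OF p(2)])
    also have "exp (- L * real H) \<le> exp L * exp (- cc * \<Lambda> / (ln \<Lambda>) ^ 2)"
    proof -
      have lp: "0 < (ln \<Lambda>)^2" using l1 by simp
      have "cc * \<Lambda> / (ln \<Lambda>) ^ 2 = (L / E) * (\<Lambda> / (\<kappa> * (ln \<Lambda>)^2))" unfolding cc_def by simp
      also have "\<dots> \<le> (L / E) * x" using low Lpos Epos by (intro mult_left_mono) auto
      also have "\<dots> = L * (x / E)" by simp
      also have "\<dots> \<le> L * (real H + 1)" using HxE Lpos by (intro mult_left_mono) auto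
      finally have "- L * real H \<le> L + - cc * \<Lambda> / (ln \<Lambda>) ^ 2" by (simp add: algebra_simps)
      then have "exp (- L * real H) \<le> exp (L + - cc * \<Lambda> / (ln \<Lambda>) ^ 2)" by (rule exp_mono)
      also have "\<dots> = exp L * exp (- cc * \<Lambda> / (ln \<Lambda>) ^ 2)" by (rule exp_add)
      finally show ?thesis .
    qed
    finally show ?case using p by (simp add: mult.assoc mult_left_mono)
  qed
  then show ?thesis unfolding expOtilde_on_def using ccpos by blast
qed

lemma case_b_zero:
  fixes B \<beta> \<sigma> :: real and S :: "real set"
  assumes B: "B > 0" "\<beta> > 0" "\<sigma> > 0" and F: "in_F (asm_b B \<beta> \<sigma>) f fz zc" and d0: "d = 0"
  shows "expOtilde_on S (kometo_regret K fz zc xr f) (\<lambda>\<Lambda>. \<Lambda> powr (\<beta> / (1 + \<beta>)))"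
proof -
  note p = pars
  obtain \<zeta> :: "real \<Rightarrow> real" and g :: "real \<Rightarrow> real \<Rightarrow> real"
    where zg: "\<forall>z\<in>{0..1}. strict_mono (g z :: real \<Rightarrow> real) \<and> (\<forall>x. \<bar>f x - g z (fz z x)\<bar> \<le> \<zeta> z)"
      and Phi: "\<forall>c\<ge>1. \<zeta> (zc c) \<le> B * exp (- (c powr \<beta>) / \<sigma>)"
    using F unfolding in_F_def asm_b_def by blast
  define \<gamma> where "\<gamma> = \<beta> / (1 + \<beta>)"
  define B' where "B' = max B \<nu>"
  define l0 where "l0 = ln (B' / \<nu>)"
  define L where "L = ln (1 / \<rho>)"
  define sf where "sf = (\<lambda>h::real. \<sigma> * (L * h + l0) + 1)"
  define W where "W = 4 * C * exp 1 * (2 * \<sigma> * L) powr (1 / \<beta>)"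
  define \<kappa>1 where "\<kappa>1 = W powr (- \<gamma>)"
  have Lpos: "0 < L" unfolding L_def using p by simp
  have Bq: "1 \<le> B' / \<nu>" unfolding B'_def using p by simp
  have B'pos: "0 < B'" unfolding B'_def using p by simp
  have l0nn: "0 \<le> l0" unfolding l0_def using Bq by simp
  have gpos: "0 < \<gamma>" unfolding \<gamma>_def using B by simp
  have g1: "\<gamma> \<le> 1" unfolding \<gamma>_def using B by simp
  have gb: "\<gamma> \<le> \<beta>"
  proof -
    have "\<beta> \<le> \<beta> * (1 + \<beta>)" using B by (simp add: algebra_simps)
    then show ?thesis unfolding \<gamma>_def using B by (simp add: divide_le_eq)
  qed
  have gid: "\<gamma> * (1 + 1 / \<beta>) = 1"
  proof -
    have "1 + 1 / \<beta> = (1 + \<beta>) / \<beta>" using B by (simp add: field_simps)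
    then show ?thesis unfolding \<gamma>_def using B by simp
  qed
  have Wpos: "0 < W" unfolding W_def using p B Lpos by simp
  have k1pos: "0 < \<kappa>1" unfolding \<kappa>1_def using Wpos by simp
  have sf1: "1 \<le> sf h" if "0 \<le> h" for h unfolding sf_def using that B Lpos l0nn by simp
  have sfmono: "sf h \<le> sf h'" if "h \<le> h'" for h h' unfolding sf_def using that B Lpos
    by (simp add: mult_left_mono)
  obtain \<kappa> where kpos: "\<kappa> > 0" and evL: "\<forall>\<^sub>F \<Lambda> in at_top. 3 \<le> \<Lambda> \<and> 1 \<le> ln \<Lambda> \<and>
            \<Lambda> / (\<kappa> * (ln \<Lambda>)^2) \<le> real (Lambda_tilde K \<Lambda>) \<and> real (Lambda_tilde K \<Lambda>) \<le> \<Lambda>"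
    using Lt_bounds[OF p(6)] by blast
  define c0 where "c0 = max (1 / \<kappa>1) ((\<sigma> * l0 + 1) / (\<sigma> * L * \<kappa>1))"
  have evX: "\<forall>\<^sub>F \<Lambda> in at_top. 1 \<le> real (Lambda_tilde K \<Lambda>) \<and> c0 \<le> real (Lambda_tilde K \<Lambda>) powr \<gamma>"
    by (rule ev_Lt[OF p(6)]) (intro eventually_conj eventually_ge_at_top ev_pow_ge gpos)
  define c3 where "c3 = 1 / \<kappa> powr \<gamma>"
  have c3pos: "0 < c3" unfolding c3_def using kpos by simp
  define cm where "cm = min (L * \<kappa>1 * c3) (c3 / \<sigma>)"
  have cmpos: "0 < cm" unfolding cm_def using Lpos k1pos c3pos B by simp
  have "\<forall>\<^sub>F \<Lambda> in at_top. \<Lambda> \<in> S \<longrightarrow>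
      kometo_regret K fz zc xr f \<Lambda> \<le> (3 * \<nu> * exp L + 2 * B) * exp (- cm * \<Lambda> powr (\<beta> / (1 + \<beta>)) / (ln \<Lambda>) ^ 2)"
    using evL evX
  proof eventually_elim
    case (elim \<Lambda>)
    define x where "x = real (Lambda_tilde K \<Lambda>)"
    define T where "T = x powr \<gamma>"
    have x1: "1 \<le> x" and Tc0: "c0 \<le> T" and low: "\<Lambda> / (\<kappa> * (ln \<Lambda>)^2) \<le> x"
      and l1: "1 \<le> ln \<Lambda>" and L3: "3 \<le> \<Lambda>"
      using elim unfolding x_def T_def by auto
    have Tpos: "0 < T" unfolding T_def using x1 by simp
    have kT1: "1 \<le> \<kappa>1 * T"
    proof -
      have "1 / \<kappa>1 \<le> T" using Tc0 unfolding c0_def by simp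
      then show ?thesis using k1pos by (simp add: divide_le_eq mult.commute)
    qed
    have kT2: "\<sigma> * l0 + 1 \<le> \<sigma> * L * \<kappa>1 * T"
    proof -
      have "(\<sigma> * l0 + 1) / (\<sigma> * L * \<kappa>1) \<le> T" using Tc0 unfolding c0_def by simp
      then show ?thesis using k1pos B Lpos by (simp add: divide_le_eq mult.commute mult.left_commute)
    qed
    define H where "H = nat \<lfloor>\<kappa>1 * T\<rfloor>"
    have fl1: "1 \<le> \<lfloor>\<kappa>1 * T\<rfloor>" using kT1 by (simp add: le_floor_iff)
    have HT: "real H \<le> \<kappa>1 * T" "\<kappa>1 * T < real H + 1" "1 \<le> real H" unfolding H_def using kT1 fl1 by linarith+
    define t where "t = ln (sf (real H)) / \<beta>"
    define j where "j = nat \<lceil>t\<rceil>"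
    have sH1: "1 \<le> sf (real H)" by (rule sf1) simp
    have t0: "0 \<le> t" unfolding t_def using sH1 B by simp
    have jt: "t \<le> real j" "real j \<le> t + 1" using nat_ceil_bounds[OF t0] unfolding j_def by auto
    have sHle: "sf (real H) \<le> 2 * \<sigma> * L * \<kappa>1 * T"
    proof -
      have "sf (real H) \<le> sf (\<kappa>1 * T)" using HT(1) by (rule sfmono)
      also have "\<dots> = \<sigma> * L * \<kappa>1 * T + (\<sigma> * l0 + 1)" unfolding sf_def by (simp add: algebra_simps)
      also have "\<dots> \<le> 2 * \<sigma> * L * \<kappa>1 * T" using kT2 by linarith
      finally show ?thesis .
    qed
    have ejle: "exp (real j) \<le> exp 1 * (2 * \<sigma> * L) powr (1 / \<beta>) * \<kappa>1 powr (1 / \<beta>) * T powr (1 / \<beta>)"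
    proof -
      have "exp (real j) \<le> exp (t + 1)" using jt by simp
      also have "\<dots> = exp 1 * sf (real H) powr (1 / \<beta>)" unfolding t_def using sH1 by (simp add: powr_def exp_add)
      also have "sf (real H) powr (1 / \<beta>) \<le> (2 * \<sigma> * L * \<kappa>1 * T) powr (1 / \<beta>)"
        using sHle sH1 B by (intro powr_mono2) auto
      also have "\<dots> = (2 * \<sigma> * L) powr (1 / \<beta>) * \<kappa>1 powr (1 / \<beta>) * T powr (1 / \<beta>)"
        using B Lpos k1pos Tpos by (simp add: powr_mult)
      finally show ?thesis by (simp add: mult.assoc)
    qed
    have cond0: "4 * C * real H * exp (real j) \<le> x"
    proof -
      have "4 * C * real H * exp (real j) \<le> 4 * C * (\<kappa>1 * T) * (exp 1 * (2 * \<sigma> * L) powr (1 / \<beta>) * \<kappa>1 powr (1 / \<beta>) * T powr (1 / \<beta>))"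
      proof -
        have "4 * C * real H \<le> 4 * C * (\<kappa>1 * T)" using HT(1) p by simp
        then show ?thesis by (rule mult_mono[OF _ ejle]) (use p k1pos Tpos in auto)
      qed
      also have "\<dots> = W * (\<kappa>1 * \<kappa>1 powr (1 / \<beta>)) * (T * T powr (1 / \<beta>))" unfolding W_def by (simp add: ac_simps)
      also have "\<kappa>1 * \<kappa>1 powr (1 / \<beta>) = 1 / W"
      proof -
        have "\<kappa>1 * \<kappa>1 powr (1 / \<beta>) = \<kappa>1 powr (1 + 1 / \<beta>)" using k1pos by (simp add: powr_add)
        also have "\<dots> = W powr (- (\<gamma> * (1 + 1 / \<beta>)))" unfolding \<kappa>1_def using Wpos by (simp add: powr_powr)
        also have "\<dots> = 1 / W" unfolding gid using Wpos by (simp add: powr_minus_divide)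
        finally show ?thesis .
      qed
      also have "T * T powr (1 / \<beta>) = x"
      proof -
        have "T * T powr (1 / \<beta>) = T powr (1 + 1 / \<beta>)" using Tpos by (simp add: powr_add)
        also have "\<dots> = x powr (\<gamma> * (1 + 1 / \<beta>))" unfolding T_def using x1 by (simp add: powr_powr)
        finally show ?thesis unfolding gid using x1 by simp
      qed
      finally show ?thesis using Wpos by simp
    qed
    have cond: "4 * C * real H * exp (real j) * \<rho> powr (- d * real H) \<le> x" using cond0 p unfolding d0 by simp
    have ej: "exp (real j) \<le> x"
    proof -
      have "1 \<le> 4 * C * real H" using HT(3) p mult_mono[of 1 "4 * C" 1 "real H"] by simp
      then have "exp (real j) \<le> 4 * C * real H * exp (real j)" by simp
      then show ?thesis using cond0 by linarith
    qed
    have zj: "\<zeta> (zc (exp (real j))) \<le> \<nu> * \<rho> ^ H"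
    proof -
      have "\<zeta> (zc (exp (real j))) \<le> B * exp (- (exp (real j) powr \<beta>) / \<sigma>)" using Phi by simp
      also have "\<dots> \<le> B' * exp (- (L * real H + l0))"
      proof -
        have "ln (sf (real H)) \<le> real j * \<beta>" using jt(1) B unfolding t_def by (simp add: divide_le_eq)
        then have "sf (real H) \<le> exp (real j * \<beta>)" using sH1
          by (metis exp_le_cancel_iff exp_ln less_le_trans zero_less_one)
        then have "\<sigma> * (L * real H + l0) \<le> exp (real j) powr \<beta>" unfolding sf_def by (simp add: powr_def mult.commute)
        then have "L * real H + l0 \<le> exp (real j) powr \<beta> / \<sigma>" using B by (simp add: le_divide_eq mult.commute)
        then have "exp (- (exp (real j) powr \<beta>) / \<sigma>) \<le> exp (- (L * real H + l0))" by simp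
        then show ?thesis unfolding B'_def using B by (intro mult_mono) auto
      qed
      also have "\<dots> = \<nu> * exp (- L * real H)" unfolding l0_def using B'pos p
        by (simp add: exp_add exp_minus field_simps exp_diff)
      also have "\<dots> = \<nu> * \<rho> ^ H" unfolding L_def using rho_pow[OF p(2), of H] by simp
      finally show ?thesis .
    qed
    have Lt1: "1 \<le> Lambda_tilde K \<Lambda>" using x1 unfolding x_def by simp
    have reg: "kometo_regret K fz zc xr f \<Lambda> \<le> 3 * \<nu> * \<rho> ^ H + 2 * \<zeta> (zc x)"
      unfolding x_def by (rule regret_le[OF part par fS fid zg Lt1 ej[unfolded x_def] zj cond[unfolded x_def]])
    define l where "l = ln \<Lambda>"
    define G where "G = \<Lambda> powr (\<beta> / (1 + \<beta>)) / l ^ 2"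
    have lpos: "0 < l" using l1 l_def by simp
    have Lpos': "0 < \<Lambda>" using L3 by simp
    have G0: "0 \<le> G" unfolding G_def by simp
    have TG: "c3 * G \<le> T"
    proof -
      have l2: "1 \<le> l ^ 2" using l1 l_def by simp
      have "(\<kappa> * l^2) powr \<gamma> = \<kappa> powr \<gamma> * (l^2) powr \<gamma>" using kpos lpos by (simp add: powr_mult)
      also have "(l^2) powr \<gamma> \<le> l^2"
      proof -
        have "(l^2) powr \<gamma> \<le> (l^2) powr 1" using l2 g1 by (intro powr_mono) auto
        then show ?thesis using lpos by simp
      qed
      finally have den: "(\<kappa> * l^2) powr \<gamma> \<le> \<kappa> powr \<gamma> * l^2" using kpos by (simp add: mult_left_mono)
      have "c3 * G = \<Lambda> powr \<gamma> / (\<kappa> powr \<gamma> * l^2)" unfolding c3_def G_def \<gamma>_def by simp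
      also have "\<dots> \<le> \<Lambda> powr \<gamma> / (\<kappa> * l^2) powr \<gamma>"
        using den kpos lpos by (intro divide_left_mono) auto
      also have "\<dots> = (\<Lambda> / (\<kappa> * l^2)) powr \<gamma>" using Lpos' kpos lpos by (simp add: powr_divide)
      also have "\<dots> \<le> x powr \<gamma>" using low gpos Lpos' kpos lpos unfolding l_def by (intro powr_mono2) auto
      finally show ?thesis unfolding T_def .
    qed
    have t1: "\<rho> ^ H \<le> exp L * exp (- cm * G)"
    proof -
      have "\<rho> ^ H = exp (- L * real H)" unfolding L_def by (rule rho_pow[OF p(2)])
      also have "\<dots> \<le> exp (L + - (L * \<kappa>1 * c3) * G)"
      proof -
        have "L * \<kappa>1 * c3 * G \<le> L * (\<kappa>1 * T)" using TG Lpos k1pos by (simp add: mult.assoc mult_left_mono)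
        also have "\<dots> \<le> L * (real H + 1)" using HT(2) Lpos by (intro mult_left_mono) auto
        finally show ?thesis by (simp add: algebra_simps)
      qed
      also have "\<dots> \<le> exp (L + - cm * G)"
      proof -
        have "cm \<le> L * \<kappa>1 * c3" unfolding cm_def by simp
        then have "cm * G \<le> (L * \<kappa>1 * c3) * G" using G0 by (rule mult_right_mono)
        then show ?thesis by simp
      qed
      also have "\<dots> = exp L * exp (- cm * G)" by (rule exp_add)
      finally show ?thesis .
    qed
    have t2: "\<zeta> (zc x) \<le> B * exp (- cm * G)"
    proof -
      have "\<zeta> (zc x) \<le> B * exp (- (x powr \<beta>) / \<sigma>)" using Phi x1 by simp
      also have "\<dots> \<le> B * exp (- cm * G)"
      proof -
        have "cm \<le> c3 / \<sigma>" unfolding cm_def by simp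
        then have "cm * G \<le> (c3 / \<sigma>) * G" using G0 by (rule mult_right_mono)
        also have "\<dots> = (c3 * G) / \<sigma>" by simp
        also have "\<dots> \<le> T / \<sigma>" using TG B by (simp add: divide_right_mono)
        also have "T \<le> x powr \<beta>" unfolding T_def using x1 gb by (intro powr_mono) auto
        finally have "cm * G \<le> x powr \<beta> / \<sigma>" using B by (simp add: divide_right_mono)
        then show ?thesis using B by simp
      qed
      finally show ?thesis .
    qed
    have "kometo_regret K fz zc xr f \<Lambda> \<le> 3 * \<nu> * (exp L * exp (- cm * G)) + 2 * (B * exp (- cm * G))"
      using reg t1 t2 p by (smt (verit) mult_left_mono)
    also have "\<dots> = (3 * \<nu> * exp L + 2 * B) * exp (- cm * G)" by (simp add: algebra_simps)
    finally show ?case unfolding G_def l_def by simp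
  qed
  then show ?thesis unfolding expOtilde_on_def using cmpos by blast
qed

lemma hi_a_ev:
  fixes A \<alpha> :: real
  assumes A: "A > 0" "\<alpha> > 0"
  shows "\<forall>\<^sub>F \<Lambda> in at_top. high_budget_a K \<nu> \<rho> d C A \<alpha> \<Lambda>"
proof -
  note p = pars
  define D where "D = d + 1 / \<alpha>"
  define L where "L = ln (1 / \<rho>)"
  define k where "k = \<nu> powr (1 / \<alpha>) * D * L / (4 * C * exp 1 * A powr (1 / \<alpha>))"
  define w0 where "w0 = max 0 (D * ln (\<nu> / (exp \<alpha> * A)))"
  have Lpos: "0 < L" unfolding L_def using p by simp
  have Dpos: "0 < D"
  proof -
    have "0 < 1 / \<alpha>" using A by simp
    then show ?thesis unfolding D_def using p by linarith
  qed
  have kpos: "0 < k" unfolding k_def using p A Lpos Dpos by simp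
  have w00: "0 \<le> w0" unfolding w0_def by simp
  have ev: "\<forall>\<^sub>F \<Lambda> in at_top. w0 * exp w0 / k \<le> real (Lambda_tilde K \<Lambda>)"
    by (rule ev_Lt[OF p(6)]) (rule eventually_ge_at_top)
  show ?thesis using ev
  proof eventually_elim
    case (elim \<Lambda>)
    define x where "x = real (Lambda_tilde K \<Lambda>)"
    have arg: "real (Lambda_tilde K \<Lambda>) * \<nu> powr (1 / \<alpha>) * (d + 1 / \<alpha>) * ln (1 / \<rho>)
                / (4 * C * exp 1 * A powr (1 / \<alpha>)) = k * x"
      unfolding k_def x_def D_def L_def by simp
    have y: "w0 * exp w0 \<le> k * x" using elim kpos unfolding x_def by (simp add: divide_le_eq mult.commute)
    have W: "w0 \<le> lambertW (k * x)" by (rule lambertW_ge[OF w00 y])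
    define h where "h = h1_a K \<nu> \<rho> d C A \<alpha> \<Lambda>"
    have h: "h = lambertW (k * x) / (D * L)" unfolding h_def h1_a_def Let_def arg[unfolded D_def L_def]
      unfolding D_def L_def by simp
    have "ln (\<nu> / (exp \<alpha> * A)) / L \<le> h"
    proof -
      have "D * ln (\<nu> / (exp \<alpha> * A)) \<le> lambertW (k * x)" using W unfolding w0_def by simp
      then have "ln (\<nu> / (exp \<alpha> * A)) \<le> lambertW (k * x) / D" using Dpos by (simp add: le_divide_eq mult.commute)
      then show ?thesis unfolding h using Lpos Dpos by (simp add: divide_right_mono field_simps)
    qed
    then have hl: "ln (\<nu> / (exp \<alpha> * A)) \<le> L * h" using Lpos by (simp add: divide_le_eq mult.commute)
    have "\<nu> * \<rho> powr h = \<nu> * exp (- L * h)" unfolding L_def using p by (simp add: powr_def ln_div)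
    also have "\<dots> \<le> \<nu> * exp (- ln (\<nu> / (exp \<alpha> * A)))" using hl p by simp
    also have "\<dots> = exp \<alpha> * A" using p A by (simp add: exp_minus ln_div exp_diff)
    finally show ?case unfolding high_budget_a_def h_def .
  qed
qed

lemma hi_b_ev:
  fixes B \<beta> \<sigma> :: real
  assumes B: "B > 0" "\<beta> > 0" "\<sigma> > 0"
  shows "\<forall>\<^sub>F \<Lambda> in at_top. high_budget_b K \<nu> \<rho> d C B \<beta> \<sigma> \<Lambda>"
proof -
  note p = pars
  define L where "L = ln (1 / \<rho>)"
  define tg where "tg = max (1 / (2 * \<sigma>)) (ln (B / \<nu>)) / L"
  define a where "a = 4 * C * exp 1"
  define c where "c = (1 / (2 * \<sigma> * L)) powr (1 / (\<beta> + 1))"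
  define e where "e = \<beta> / (\<beta> + 1)"
  define k where "k = \<beta> / (\<beta> + 1) * d * L"
  define w0 where "w0 = max 0 (tg * (\<beta> * d * L) / (\<beta> + 1))"
  have Lpos: "0 < L" unfolding L_def using p by simp
  have apos: "0 < a" unfolding a_def using p by simp
  have cpos: "0 < c" unfolding c_def using B Lpos by simp
  have epos: "0 < e" unfolding e_def using B by simp
  define thr where "thr = (if d = 0 then tg else w0 * exp w0 / k)"
  have evx: "\<forall>\<^sub>F x in at_top. thr \<le> (x / a) powr e * c" using apos epos cpos by real_asymp
  have ev: "\<forall>\<^sub>F \<Lambda> in at_top. thr \<le> (real (Lambda_tilde K \<Lambda>) / a) powr e * c"
    by (rule ev_Lt[OF p(6) evx])
  show ?thesis using ev
  proof eventually_elim
    case (elim \<Lambda>)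
    define Y where "Y = (real (Lambda_tilde K \<Lambda>) / a) powr e * c"
    have Yeq: "(real (Lambda_tilde K \<Lambda>) / (4 * C * exp 1)) powr (\<beta> / (\<beta> + 1)) *
              (1 / (2 * \<sigma> * ln (1 / \<rho>))) powr (1 / (\<beta> + 1)) = Y"
      unfolding Y_def a_def e_def c_def L_def ..
    show ?case
    proof (cases "d = 0")
      case True
      have "h1_b K \<rho> d C \<beta> \<sigma> \<Lambda> = Y" unfolding h1_b_def Let_def Yeq using True by simp
      then show ?thesis unfolding high_budget_b_def using elim True unfolding thr_def tg_def L_def Y_def by simp
    next
      case False
      then have dpos: "0 < d" using p by simp
      have kpos: "0 < k" unfolding k_def using B dpos Lpos by simp
      have "w0 * exp w0 / k \<le> Y" using elim False unfolding thr_def Y_def by simp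
      then have y: "w0 * exp w0 \<le> k * Y" using kpos by (simp add: divide_le_eq mult.commute)
      have W: "w0 \<le> lambertW (k * Y)" by (rule lambertW_ge[OF _ y]) (simp add: w0_def)
      have h: "h1_b K \<rho> d C \<beta> \<sigma> \<Lambda> = (\<beta> + 1) / (\<beta> * d * L) * lambertW (k * Y)"
        unfolding h1_b_def Let_def Yeq using False unfolding k_def L_def by simp
      have "tg * (\<beta> * d * L) / (\<beta> + 1) \<le> lambertW (k * Y)" using W unfolding w0_def by simp
      then have "tg \<le> (\<beta> + 1) / (\<beta> * d * L) * lambertW (k * Y)"
        using B dpos Lpos by (simp add: divide_le_eq le_divide_eq mult.commute mult.left_commute)
      then show ?thesis unfolding high_budget_b_def h tg_def L_def .
    qed
  qed
qed
end

lemma Otilde_empty: "\<forall>\<^sub>F \<Lambda> in at_top. \<Lambda> \<notin> S \<Longrightarrow> Otilde_on S r g"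
  unfolding Otilde_on_def by (rule exI[of _ 0], rule exI[of _ 0]) (auto elim: eventually_mono)

lemma expOtilde2_empty: "\<forall>\<^sub>F \<Lambda> in at_top. \<Lambda> \<notin> S \<Longrightarrow> expOtilde2_on S r g1 g2"
  unfolding expOtilde2_on_def
  by (rule exI[of _ 0], rule exI[of _ 1], rule exI[of _ 0], rule exI[of _ 0], rule exI[of _ 1], rule exI[of _ 0])
     (auto elim: eventually_mono)

theorem corollary4:
  fixes K :: nat and P :: "nat \<Rightarrow> nat \<Rightarrow> 'x set" and xr :: "nat \<Rightarrow> nat \<Rightarrow> 'x"
    and \<nu> \<rho> d C :: real and f :: "'x \<Rightarrow> real"
    and fz :: "real \<Rightarrow> 'x \<Rightarrow> real" and lam zc :: "real \<Rightarrow> real"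
  assumes part: "hier_part K P xr"
    and par: "params_ok K \<nu> \<rho> d C"
    and fS: "in_S K P \<nu> \<rho> d C f"
    and fid: "fidelities_ok lam zc"
  defines "r \<equiv> kometo_regret K fz zc xr f"
  shows
    "(\<forall>A \<alpha>. A > 0 \<and> \<alpha> > 0 \<and> in_F (asm_a A \<alpha>) f fz zc \<longrightarrow>
        (let Hi = {\<Lambda>. high_budget_a K \<nu> \<rho> d C A \<alpha> \<Lambda>};
             Lo = {\<Lambda>. \<not> high_budget_a K \<nu> \<rho> d C A \<alpha> \<Lambda>} in
          (d = 0 \<longrightarrow> Otilde_on Hi r (\<lambda>\<Lambda>. \<Lambda> powr (- \<alpha>)) \<and> Otilde_on Lo r (\<lambda>\<Lambda>. \<Lambda> powr (- \<alpha>))) \<and>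
          (d > 0 \<longrightarrow> Otilde_on Hi r (\<lambda>\<Lambda>. \<Lambda> powr (- 1 / (d + 1 / \<alpha>))) \<and>
                     Otilde_on Lo r (\<lambda>\<Lambda>. \<Lambda> powr (- 1 / d) + \<Lambda> powr (- \<alpha>))))) \<and>
     (\<forall>B \<beta> \<sigma>. B > 0 \<and> \<beta> > 0 \<and> \<sigma> > 0 \<and> in_F (asm_b B \<beta> \<sigma>) f fz zc \<longrightarrow>
        (let Hi = {\<Lambda>. high_budget_b K \<nu> \<rho> d C B \<beta> \<sigma> \<Lambda>};
             Lo = {\<Lambda>. \<not> high_budget_b K \<nu> \<rho> d C B \<beta> \<sigma> \<Lambda>} in
          (d = 0 \<longrightarrow> expOtilde_on Hi r (\<lambda>\<Lambda>. \<Lambda> powr (\<beta> / (1 + \<beta>))) \<and>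
                     expOtilde2_on Lo r (\<lambda>\<Lambda>. \<Lambda> powr \<beta>) (\<lambda>\<Lambda>. \<Lambda>)) \<and>
          (d > 0 \<longrightarrow> Otilde_on Hi r (\<lambda>\<Lambda>. \<Lambda> powr (- 1 / d)) \<and>
                     Otilde_on Lo r (\<lambda>\<Lambda>. \<Lambda> powr (- 1 / d))))) \<and>
     (\<forall>a. a \<ge> 1 \<and> in_F (asm_c a) f fz zc \<longrightarrow>
          (d = 0 \<longrightarrow> expOtilde_on UNIV r (\<lambda>\<Lambda>. \<Lambda>)) \<and>
          (d > 0 \<longrightarrow> Otilde_on UNIV r (\<lambda>\<Lambda>. \<Lambda> powr (- 1 / d))))"
  proof -
  have dge: "0 \<le> d" using par by (simp add: params_ok_def)
  show ?thesis unfolding r_def Let_def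
  proof (intro conjI allI impI)
    fix A \<alpha> :: real assume h: "A > 0 \<and> \<alpha> > 0 \<and> in_F (asm_a A \<alpha>) f fz zc"
    then have A: "A > 0" "\<alpha> > 0" and F: "in_F (asm_a A \<alpha>) f fz zc" by auto
    note ca = case_a[OF part par fS fid A F]
    {
      assume d0: "d = 0"
      have e: "(\<lambda>\<Lambda>::real. \<Lambda> powr (- \<alpha>)) = (\<lambda>\<Lambda>. \<Lambda> powr (- (1 / (d + 1 / \<alpha>))))" using d0 by simp
      show "Otilde_on {\<Lambda>. high_budget_a K \<nu> \<rho> d C A \<alpha> \<Lambda>} (kometo_regret K fz zc xr f) (\<lambda>\<Lambda>. \<Lambda> powr - \<alpha>)"
        unfolding e by (rule ca)
      show "Otilde_on {\<Lambda>. \<not> high_budget_a K \<nu> \<rho> d C A \<alpha> \<Lambda>} (kometo_regret K fz zc xr f) (\<lambda>\<Lambda>. \<Lambda> powr - \<alpha>)"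
        unfolding e by (rule ca)
    }
    {
      assume dp: "0 < d"
      have e: "(\<lambda>\<Lambda>::real. \<Lambda> powr (- 1 / (d + 1 / \<alpha>))) = (\<lambda>\<Lambda>. \<Lambda> powr (- (1 / (d + 1 / \<alpha>))))" by simp
      show "Otilde_on {\<Lambda>. high_budget_a K \<nu> \<rho> d C A \<alpha> \<Lambda>} (kometo_regret K fz zc xr f) (\<lambda>\<Lambda>. \<Lambda> powr (- 1 / (d + 1 / \<alpha>)))"
        unfolding e by (rule ca)
      show "Otilde_on {\<Lambda>. \<not> high_budget_a K \<nu> \<rho> d C A \<alpha> \<Lambda>} (kometo_regret K fz zc xr f) (\<lambda>\<Lambda>. \<Lambda> powr (- 1 / d) + \<Lambda> powr - \<alpha>)"
        by (rule Otilde_empty) (use hi_a_ev[OF part par fS fid A] in \<open>auto elim: eventually_mono\<close>)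
    }
  next
    fix B \<beta> \<sigma> :: real assume h: "B > 0 \<and> \<beta> > 0 \<and> \<sigma> > 0 \<and> in_F (asm_b B \<beta> \<sigma>) f fz zc"
    then have B: "B > 0" "\<beta> > 0" "\<sigma> > 0" and F: "in_F (asm_b B \<beta> \<sigma>) f fz zc" by auto
    {
      assume d0: "d = 0"
      show "expOtilde_on {\<Lambda>. high_budget_b K \<nu> \<rho> d C B \<beta> \<sigma> \<Lambda>} (kometo_regret K fz zc xr f) (\<lambda>\<Lambda>. \<Lambda> powr (\<beta> / (1 + \<beta>)))"
        by (rule case_b_zero[OF part par fS fid B F d0])
      show "expOtilde2_on {\<Lambda>. \<not> high_budget_b K \<nu> \<rho> d C B \<beta> \<sigma> \<Lambda>} (kometo_regret K fz zc xr f) (\<lambda>\<Lambda>. \<Lambda> powr \<beta>) (\<lambda>\<Lambda>. \<Lambda>)"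
        by (rule expOtilde2_empty) (use hi_b_ev[OF part par fS fid B] in \<open>auto elim: eventually_mono\<close>)
    }
    {
      assume dp: "0 < d"
      show "Otilde_on {\<Lambda>. high_budget_b K \<nu> \<rho> d C B \<beta> \<sigma> \<Lambda>} (kometo_regret K fz zc xr f) (\<lambda>\<Lambda>. \<Lambda> powr (- 1 / d))"
        by (rule case_b_pos[OF part par fS fid B F dp])
      show "Otilde_on {\<Lambda>. \<not> high_budget_b K \<nu> \<rho> d C B \<beta> \<sigma> \<Lambda>} (kometo_regret K fz zc xr f) (\<lambda>\<Lambda>. \<Lambda> powr (- 1 / d))"
        by (rule case_b_pos[OF part par fS fid B F dp])
    }
  next
    fix a :: real assume h: "a \<ge> 1 \<and> in_F (asm_c a) f fz zc"
    then have a: "a \<ge> 1" and F: "in_F (asm_c a) f fz zc" by auto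
    {
      assume d0: "d = 0"
      show "expOtilde_on UNIV (kometo_regret K fz zc xr f) (\<lambda>\<Lambda>. \<Lambda>)"
        by (rule case_c_zero[OF part par fS fid a F d0])
    }
    {
      assume dp: "0 < d"
      show "Otilde_on UNIV (kometo_regret K fz zc xr f) (\<lambda>\<Lambda>. \<Lambda> powr (- 1 / d))"
        by (rule case_c_pos[OF part par fS fid a F dp])
    }
  qed
qed

end
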